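(* Let $A$ be a finite direct product of elementary abelian groups, written additively, let $U$ be an $F$-relevant subgroup of $\mathrm{Aut}(A)$, let $N(U) = N_{\mathrm{Aut}(A)}(U)$, and let $\delta \in Z^2(U,A)$. Then restriction to $A$ defines an epimorphism \[ \eta : \mathrm{Aut}(G_\delta) \to \mathrm{Stab}_{N(U)}([\delta]),\quad \alpha \mapsto \alpha|_A, \] and $\ker(\eta) \cong Z^1(U,A)$.
   Context: $U$ acts on $A$ naturally, and $Z^1(U,A)$, $Z^2(U,A)$, $B^2(U,A)$, $H^2(U,A)$ are the groups of $1$-cocycles, $2$-cocycles, $2$-coboundaries and the second cohomology group for this action; $[\delta] = \delta + B^2(U,A)$. $G_\delta$ denotes the extension of $A$ by $U$ defined by $\delta$ (with $A$ identified with its canonical normal subgroup of $G_\delta$). The group $N(U)$ acts on $Z^2(U,A)$ by $(g(\delta))(u,v) = g\big(\delta(g^{-1}ug, g^{-1}vg)\big)$, inducing an action on $H^2(U,A)$ by $g([\delta]) = [g(\delta)]$. A subgroup $N \le \mathrm{Aut}(A)$ centralizes a series through $A$ if there is an $N$-invariant series $A = A_1 > \cdots > A_{l+1} = \{1\}$ with $N$ acting trivially on each $A_i/A_{i+1}$; $U\le\mathrm{Aut}(A)$ is $F$-relevant if no non-trivial normal subgroup of $U$ centralizes a series through $A$. *)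

theory Defs
  imports "HOL-Algebra.Algebra" "HOL-Computational_Algebra.Primes"
begin

(* Groups are HOL-Algebra monoid records; A is written multiplicatively here
   (the paper writes it additively). Aut(A) = AutoGroup A, whose elements are
   automorphisms (extensional on carrier A), multiplication = composition. *)

definition elementary_abelian :: "('a, 'b) monoid_scheme \<Rightarrow> bool" where
  "elementary_abelian G \<longleftrightarrow> comm_group G \<and>
     (\<exists>p::nat. Factorial_Ring.prime p \<and> (\<forall>x\<in>carrier G. x [^]\<^bsub>G\<^esub> p = \<one>\<^bsub>G\<^esub>))"

definition fin_prod_elem_abelian :: "('a, 'b) monoid_scheme \<Rightarrow> bool" where
  "fin_prod_elem_abelian A \<longleftrightarrow> comm_group A \<and> finite (carrier A) \<and>
     (\<exists>(n::nat) (H :: nat \<Rightarrow> 'a set).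
        (\<forall>i<n. subgroup (H i) A \<and> elementary_abelian (A\<lparr>carrier := H i\<rparr>)) \<and>
        A \<cong> product_group {..<n} (\<lambda>i. A\<lparr>carrier := H i\<rparr>))"

definition centralizes_series :: "('a, 'b) monoid_scheme \<Rightarrow> ('a \<Rightarrow> 'a) set \<Rightarrow> bool" where
  "centralizes_series A N \<longleftrightarrow>
     (\<exists>(l::nat) (S :: nat \<Rightarrow> 'a set).
        S 0 = carrier A \<and> S l = {\<one>\<^bsub>A\<^esub>} \<and>
        (\<forall>i\<le>l. subgroup (S i) A) \<and>
        (\<forall>i<l. S (Suc i) \<subset> S i) \<and>
        (\<forall>g\<in>N. \<forall>i\<le>l. g ` S i = S i) \<and>
        (\<forall>g\<in>N. \<forall>i<l. \<forall>a\<in>S i. g a \<otimes>\<^bsub>A\<^esub> inv\<^bsub>A\<^esub> a \<in> S (Suc i)))"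

definition F_relevant :: "('a, 'b) monoid_scheme \<Rightarrow> ('a \<Rightarrow> 'a) set \<Rightarrow> bool" where
  "F_relevant A U \<longleftrightarrow>
     (\<forall>N. N \<lhd> (AutoGroup A)\<lparr>carrier := U\<rparr> \<and> N \<noteq> {\<one>\<^bsub>AutoGroup A\<^esub>}
          \<longrightarrow> \<not> centralizes_series A N)"

definition NAut :: "('a, 'b) monoid_scheme \<Rightarrow> ('a \<Rightarrow> 'a) set \<Rightarrow> ('a \<Rightarrow> 'a) set" where
  "NAut A U = {g \<in> auto A.
     (\<lambda>u. g \<otimes>\<^bsub>AutoGroup A\<^esub> u \<otimes>\<^bsub>AutoGroup A\<^esub> inv\<^bsub>AutoGroup A\<^esub> g) ` U = U}"

definition Z1 :: "('a, 'b) monoid_scheme \<Rightarrow> ('a \<Rightarrow> 'a) set \<Rightarrow> (('a \<Rightarrow> 'a) \<Rightarrow> 'a) set" where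
  "Z1 A U = {f \<in> extensional U. f \<in> U \<rightarrow> carrier A \<and>
     (\<forall>u\<in>U. \<forall>v\<in>U. f (u \<otimes>\<^bsub>AutoGroup A\<^esub> v) = f u \<otimes>\<^bsub>A\<^esub> u (f v))}"

definition Z1_group :: "('a, 'b) monoid_scheme \<Rightarrow> ('a \<Rightarrow> 'a) set \<Rightarrow> (('a \<Rightarrow> 'a) \<Rightarrow> 'a) monoid" where
  "Z1_group A U = \<lparr>carrier = Z1 A U,
     monoid.mult = (\<lambda>f g. \<lambda>u\<in>U. f u \<otimes>\<^bsub>A\<^esub> g u),
     one = (\<lambda>u\<in>U. \<one>\<^bsub>A\<^esub>)\<rparr>"

definition Z2 :: "('a, 'b) monoid_scheme \<Rightarrow> ('a \<Rightarrow> 'a) set \<Rightarrow> (('a \<Rightarrow> 'a) \<Rightarrow> ('a \<Rightarrow> 'a) \<Rightarrow> 'a) set" where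
  "Z2 A U = {\<delta>. (\<forall>u\<in>U. \<forall>v\<in>U. \<delta> u v \<in> carrier A) \<and>
     (\<forall>u\<in>U. \<forall>v\<in>U. \<forall>w\<in>U.
        \<delta> u v \<otimes>\<^bsub>A\<^esub> \<delta> (u \<otimes>\<^bsub>AutoGroup A\<^esub> v) w
        = u (\<delta> v w) \<otimes>\<^bsub>A\<^esub> \<delta> u (v \<otimes>\<^bsub>AutoGroup A\<^esub> w))}"

definition cobound2 :: "('a, 'b) monoid_scheme \<Rightarrow> (('a \<Rightarrow> 'a) \<Rightarrow> 'a) \<Rightarrow> ('a \<Rightarrow> 'a) \<Rightarrow> ('a \<Rightarrow> 'a) \<Rightarrow> 'a" where
  "cobound2 A f u v = f u \<otimes>\<^bsub>A\<^esub> u (f v) \<otimes>\<^bsub>A\<^esub> inv\<^bsub>A\<^esub> (f (u \<otimes>\<^bsub>AutoGroup A\<^esub> v))"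

definition H2class :: "('a, 'b) monoid_scheme \<Rightarrow> ('a \<Rightarrow> 'a) set \<Rightarrow> (('a \<Rightarrow> 'a) \<Rightarrow> ('a \<Rightarrow> 'a) \<Rightarrow> 'a)
      \<Rightarrow> (('a \<Rightarrow> 'a) \<Rightarrow> ('a \<Rightarrow> 'a) \<Rightarrow> 'a) set" where
  "H2class A U \<delta> = {\<delta>' \<in> Z2 A U. \<exists>f \<in> U \<rightarrow> carrier A.
      \<forall>u\<in>U. \<forall>v\<in>U. \<delta>' u v = \<delta> u v \<otimes>\<^bsub>A\<^esub> cobound2 A f u v}"

definition act2 :: "('a, 'b) monoid_scheme \<Rightarrow> ('a \<Rightarrow> 'a) \<Rightarrow> (('a \<Rightarrow> 'a) \<Rightarrow> ('a \<Rightarrow> 'a) \<Rightarrow> 'a)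
      \<Rightarrow> ('a \<Rightarrow> 'a) \<Rightarrow> ('a \<Rightarrow> 'a) \<Rightarrow> 'a" where
  "act2 A g \<delta> u v = g (\<delta>
      (inv\<^bsub>AutoGroup A\<^esub> g \<otimes>\<^bsub>AutoGroup A\<^esub> u \<otimes>\<^bsub>AutoGroup A\<^esub> g)
      (inv\<^bsub>AutoGroup A\<^esub> g \<otimes>\<^bsub>AutoGroup A\<^esub> v \<otimes>\<^bsub>AutoGroup A\<^esub> g))"

definition Stab :: "('a, 'b) monoid_scheme \<Rightarrow> ('a \<Rightarrow> 'a) set \<Rightarrow> (('a \<Rightarrow> 'a) \<Rightarrow> ('a \<Rightarrow> 'a) \<Rightarrow> 'a)
      \<Rightarrow> ('a \<Rightarrow> 'a) set" where
  "Stab A U \<delta> = {g \<in> NAut A U. H2class A U (act2 A g \<delta>) = H2class A U \<delta>}"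

definition ext_group :: "('a, 'b) monoid_scheme \<Rightarrow> ('a \<Rightarrow> 'a) set \<Rightarrow> (('a \<Rightarrow> 'a) \<Rightarrow> ('a \<Rightarrow> 'a) \<Rightarrow> 'a)
      \<Rightarrow> ('a \<times> ('a \<Rightarrow> 'a)) monoid" where
  "ext_group A U \<delta> = \<lparr>carrier = carrier A \<times> U,
     monoid.mult = (\<lambda>(a, u) (b, v). (a \<otimes>\<^bsub>A\<^esub> u b \<otimes>\<^bsub>A\<^esub> \<delta> u v, u \<otimes>\<^bsub>AutoGroup A\<^esub> v)),
     one = (inv\<^bsub>A\<^esub> (\<delta> \<one>\<^bsub>AutoGroup A\<^esub> \<one>\<^bsub>AutoGroup A\<^esub>), \<one>\<^bsub>AutoGroup A\<^esub>)\<rparr>"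

definition ext_emb :: "('a, 'b) monoid_scheme \<Rightarrow> (('a \<Rightarrow> 'a) \<Rightarrow> ('a \<Rightarrow> 'a) \<Rightarrow> 'a) \<Rightarrow> 'a \<Rightarrow> 'a \<times> ('a \<Rightarrow> 'a)" where
  "ext_emb A \<delta> a = (a \<otimes>\<^bsub>A\<^esub> inv\<^bsub>A\<^esub> (\<delta> \<one>\<^bsub>AutoGroup A\<^esub> \<one>\<^bsub>AutoGroup A\<^esub>), \<one>\<^bsub>AutoGroup A\<^esub>)"

definition restr_A :: "('a, 'b) monoid_scheme \<Rightarrow> (('a \<Rightarrow> 'a) \<Rightarrow> ('a \<Rightarrow> 'a) \<Rightarrow> 'a)
      \<Rightarrow> ('a \<times> ('a \<Rightarrow> 'a) \<Rightarrow> 'a \<times> ('a \<Rightarrow> 'a)) \<Rightarrow> 'a \<Rightarrow> 'a" where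
  "restr_A A \<delta> \<alpha> = (\<lambda>a\<in>carrier A. inv_into (carrier A) (ext_emb A \<delta>) (\<alpha> (ext_emb A \<delta> a)))"

end

theory Submission
  imports Defs
begin


locale ectx =
  fixes A :: "('a, 'b) monoid_scheme" (structure)
    and U :: "('a \<Rightarrow> 'a) set"
    and \<delta> :: "('a \<Rightarrow> 'a) \<Rightarrow> ('a \<Rightarrow> 'a) \<Rightarrow> 'a"
  assumes cg: "comm_group A"
    and Usg: "subgroup U (AutoGroup A)"
    and dZ: "\<delta> \<in> Z2 A U"

sublocale ectx \<subseteq> comm_group A by (rule cg)

context ectx begin

abbreviation "Aut \<equiv> AutoGroup A"
abbreviation "GG \<equiv> ext_group A U \<delta>"
abbreviation "ONE \<equiv> \<one>\<^bsub>Aut\<^esub>"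
abbreviation "e0 \<equiv> \<delta> ONE ONE"
abbreviation "emb \<equiv> ext_emb A \<delta>"

lemma Aut_group: "group Aut"
  by (rule AutoGroup)

end

sublocale ectx \<subseteq> Aut: group "AutoGroup A" by (rule AutoGroup)

context ectx begin

lemma carrier_Aut: "carrier Aut = auto A"
  by (simp add: AutoGroup_def)

lemma ONE_def': "ONE = (\<lambda>x\<in>carrier A. x)"
  by (simp add: AutoGroup_def BijGroup_def)

lemma Aut_mult: "u \<in> auto A \<Longrightarrow> v \<in> auto A \<Longrightarrow> u \<otimes>\<^bsub>Aut\<^esub> v = compose (carrier A) u v"
  by (simp add: AutoGroup_def BijGroup_def auto_def)

lemma Aut_mult_apply: "u \<in> auto A \<Longrightarrow> v \<in> auto A \<Longrightarrow> a \<in> carrier A \<Longrightarrow> (u \<otimes>\<^bsub>Aut\<^esub> v) a = u (v a)"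
  by (simp add: Aut_mult compose_def)

lemma ONE_apply [simp]: "a \<in> carrier A \<Longrightarrow> ONE a = a"
  by (simp add: ONE_def')

lemma auto_hom0: "u \<in> auto A \<Longrightarrow> u \<in> hom A A"
  by (simp add: auto_def)

lemma auto_closed [simp]: "u \<in> auto A \<Longrightarrow> a \<in> carrier A \<Longrightarrow> u a \<in> carrier A"
  by (rule hom_in_carrier[OF auto_hom0])

lemma auto_mult [simp]: "u \<in> auto A \<Longrightarrow> a \<in> carrier A \<Longrightarrow> b \<in> carrier A \<Longrightarrow> u (a \<otimes> b) = u a \<otimes> u b"
  by (rule hom_mult[OF auto_hom0])

lemma auto_hom: "u \<in> auto A \<Longrightarrow> group_hom A A u"
  by (simp add: auto_hom0 group_hom_def group_hom_axioms_def is_group)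

lemma auto_one [simp]: "u \<in> auto A \<Longrightarrow> u \<one> = \<one>"
  using group_hom.hom_one[OF auto_hom] by blast

lemma auto_inv [simp]: "u \<in> auto A \<Longrightarrow> a \<in> carrier A \<Longrightarrow> u (inv a) = inv (u a)"
  using group_hom.hom_inv[OF auto_hom] by blast

lemma auto_ext: "u \<in> auto A \<Longrightarrow> u \<in> extensional (carrier A)"
  by (auto simp: auto_def Bij_def)

lemma auto_eqI: "u \<in> auto A \<Longrightarrow> v \<in> auto A \<Longrightarrow> (\<And>a. a \<in> carrier A \<Longrightarrow> u a = v a) \<Longrightarrow> u = v"
  by (rule extensionalityI[OF auto_ext auto_ext])

lemma U_auto [simp]: "u \<in> U \<Longrightarrow> u \<in> auto A"
  using subgroup.subset[OF Usg] carrier_Aut by blast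

lemma U_mult [simp]: "u \<in> U \<Longrightarrow> v \<in> U \<Longrightarrow> u \<otimes>\<^bsub>Aut\<^esub> v \<in> U"
  using subgroup.m_closed[OF Usg] by blast

lemma U_inv [simp]: "u \<in> U \<Longrightarrow> inv\<^bsub>Aut\<^esub> u \<in> U"
  using subgroup.m_inv_closed[OF Usg] by blast

lemma U_one [simp]: "ONE \<in> U"
  using subgroup.one_closed[OF Usg] by blast

lemma U_mult_apply [simp]: "u \<in> U \<Longrightarrow> v \<in> U \<Longrightarrow> a \<in> carrier A \<Longrightarrow> (u \<otimes>\<^bsub>Aut\<^esub> v) a = u (v a)"
  by (simp add: Aut_mult_apply)

lemma auto_inv_apply1: "g \<in> auto A \<Longrightarrow> a \<in> carrier A \<Longrightarrow> g ((inv\<^bsub>Aut\<^esub> g) a) = a"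
proof -
  assume g: "g \<in> auto A" and a: "a \<in> carrier A"
  have gi: "inv\<^bsub>Aut\<^esub> g \<in> auto A" using g Aut.inv_closed carrier_Aut by auto
  have "g \<otimes>\<^bsub>Aut\<^esub> inv\<^bsub>Aut\<^esub> g = ONE" using g Aut.r_inv carrier_Aut by auto
  hence "(g \<otimes>\<^bsub>Aut\<^esub> inv\<^bsub>Aut\<^esub> g) a = a" using a by simp
  thus ?thesis using Aut_mult_apply[OF g gi a] by simp
qed

lemma auto_inv_apply2: "g \<in> auto A \<Longrightarrow> a \<in> carrier A \<Longrightarrow> (inv\<^bsub>Aut\<^esub> g) (g a) = a"
proof -
  assume g: "g \<in> auto A" and a: "a \<in> carrier A"
  have gi: "inv\<^bsub>Aut\<^esub> g \<in> auto A" using g Aut.inv_closed carrier_Aut by auto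
  have "inv\<^bsub>Aut\<^esub> g \<otimes>\<^bsub>Aut\<^esub> g = ONE" using g Aut.l_inv carrier_Aut by auto
  hence "(inv\<^bsub>Aut\<^esub> g \<otimes>\<^bsub>Aut\<^esub> g) a = a" using a by simp
  thus ?thesis using Aut_mult_apply[OF gi g a] by simp
qed

lemma auto_inv_auto [simp]: "g \<in> auto A \<Longrightarrow> inv\<^bsub>Aut\<^esub> g \<in> auto A"
  using Aut.inv_closed carrier_Aut by auto

lemma auto_mult_auto [simp]: "g \<in> auto A \<Longrightarrow> h \<in> auto A \<Longrightarrow> g \<otimes>\<^bsub>Aut\<^esub> h \<in> auto A"
  using Aut.m_closed carrier_Aut by auto

lemma ONE_auto [simp]: "ONE \<in> auto A"
  using Aut.one_closed carrier_Aut by auto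

lemma auto_l_one [simp]: "u \<in> auto A \<Longrightarrow> ONE \<otimes>\<^bsub>Aut\<^esub> u = u"
  using Aut.l_one carrier_Aut by auto

lemma auto_r_one [simp]: "u \<in> auto A \<Longrightarrow> u \<otimes>\<^bsub>Aut\<^esub> ONE = u"
  using Aut.r_one carrier_Aut by auto

lemma d_closed [simp]: "u \<in> U \<Longrightarrow> v \<in> U \<Longrightarrow> \<delta> u v \<in> carrier A"
  using dZ by (simp add: Z2_def)

lemma cocycle: "u \<in> U \<Longrightarrow> v \<in> U \<Longrightarrow> w \<in> U \<Longrightarrow>
   \<delta> u v \<otimes> \<delta> (u \<otimes>\<^bsub>Aut\<^esub> v) w = u (\<delta> v w) \<otimes> \<delta> u (v \<otimes>\<^bsub>Aut\<^esub> w)"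
  using dZ by (simp add: Z2_def)

lemma d_one_left: "v \<in> U \<Longrightarrow> \<delta> ONE v = e0"
proof -
  assume v: "v \<in> U"
  have "\<delta> ONE ONE \<otimes> \<delta> ONE v = \<delta> ONE v \<otimes> \<delta> ONE v"
    using cocycle[of ONE ONE v] v by simp
  thus ?thesis using v by (simp add: r_cancel)
qed

lemma d_one_right: "u \<in> U \<Longrightarrow> \<delta> u ONE = u e0"
proof -
  assume u: "u \<in> U"
  have "\<delta> u ONE \<otimes> \<delta> u ONE = u e0 \<otimes> \<delta> u ONE"
    using cocycle[of u ONE ONE] u by simp
  thus ?thesis using u by (simp add: r_cancel)
qed

end



context ectx begin

lemma GG_carrier: "carrier GG = carrier A \<times> U"
  by (simp add: ext_group_def)

lemma GG_mult [simp]: "(a, u) \<otimes>\<^bsub>GG\<^esub> (b, v) = (a \<otimes> u b \<otimes> \<delta> u v, u \<otimes>\<^bsub>Aut\<^esub> v)"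
  by (simp add: ext_group_def)

lemma GG_one: "\<one>\<^bsub>GG\<^esub> = (inv e0, ONE)"
  by (simp add: ext_group_def)

lemma e0_closed [simp]: "e0 \<in> carrier A"
  by simp

lemmas cl = m_closed inv_closed auto_closed d_closed U_auto U_mult U_inv U_one e0_closed one_closed

lemma GG_group: "group GG"
proof (rule groupI)
  fix x y assume "x \<in> carrier GG" "y \<in> carrier GG"
  thus "x \<otimes>\<^bsub>GG\<^esub> y \<in> carrier GG" by (cases x, cases y) (auto simp add: GG_carrier)
next
  show "\<one>\<^bsub>GG\<^esub> \<in> carrier GG" by (simp add: GG_one GG_carrier)
next
  fix x y z assume xyz: "x \<in> carrier GG" "y \<in> carrier GG" "z \<in> carrier GG"
  obtain a u where x: "x = (a, u)" "a \<in> carrier A" "u \<in> U" using xyz by (cases x) (auto simp: GG_carrier)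
  obtain b v where y: "y = (b, v)" "b \<in> carrier A" "v \<in> U" using xyz by (cases y) (auto simp: GG_carrier)
  obtain c w where z: "z = (c, w)" "c \<in> carrier A" "w \<in> U" using xyz by (cases z) (auto simp: GG_carrier)
  have "x \<otimes>\<^bsub>GG\<^esub> y \<otimes>\<^bsub>GG\<^esub> z = ((a \<otimes> u b \<otimes> \<delta> u v) \<otimes> (u \<otimes>\<^bsub>Aut\<^esub> v) c \<otimes> \<delta> (u \<otimes>\<^bsub>Aut\<^esub> v) w, (u \<otimes>\<^bsub>Aut\<^esub> v) \<otimes>\<^bsub>Aut\<^esub> w)"
    using x y z by simp
  also have "\<dots> = (a \<otimes> u b \<otimes> u (v c) \<otimes> (\<delta> u v \<otimes> \<delta> (u \<otimes>\<^bsub>Aut\<^esub> v) w), u \<otimes>\<^bsub>Aut\<^esub> (v \<otimes>\<^bsub>Aut\<^esub> w))"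
    using x y z by (simp add: m_ac Aut.m_assoc carrier_Aut)
  also have "\<dots> = (a \<otimes> u b \<otimes> u (v c) \<otimes> (u (\<delta> v w) \<otimes> \<delta> u (v \<otimes>\<^bsub>Aut\<^esub> w)), u \<otimes>\<^bsub>Aut\<^esub> (v \<otimes>\<^bsub>Aut\<^esub> w))"
    using x y z by (simp add: cocycle)
  also have "\<dots> = x \<otimes>\<^bsub>GG\<^esub> (y \<otimes>\<^bsub>GG\<^esub> z)"
    using x y z by (simp add: m_ac)
  finally show "x \<otimes>\<^bsub>GG\<^esub> y \<otimes>\<^bsub>GG\<^esub> z = x \<otimes>\<^bsub>GG\<^esub> (y \<otimes>\<^bsub>GG\<^esub> z)" .
next
  fix x assume xc: "x \<in> carrier GG"
  obtain a u where x: "x = (a, u)" "a \<in> carrier A" "u \<in> U" using xc by (cases x) (auto simp: GG_carrier)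
  have "inv e0 \<otimes> a \<otimes> e0 = a \<otimes> (inv e0 \<otimes> e0)" using x by (simp only: m_ac cl)
  also have "\<dots> = a" using x by simp
  finally have eq: "inv e0 \<otimes> a \<otimes> e0 = a" .
  show "\<one>\<^bsub>GG\<^esub> \<otimes>\<^bsub>GG\<^esub> x = x" using x by (simp add: GG_one d_one_left[OF x(3)] eq)
next
  fix x assume xc: "x \<in> carrier GG"
  obtain a u where x: "x = (a, u)" "a \<in> carrier A" "u \<in> U" using xc by (cases x) (auto simp: GG_carrier)
  define u' where "u' = inv\<^bsub>Aut\<^esub> u"
  have u': "u' \<in> U" using x by (simp add: u'_def)
  define y where "y = (inv e0 \<otimes> inv (u' a) \<otimes> inv (\<delta> u' u), u')"
  have "y \<in> carrier GG" using x u' by (simp add: y_def GG_carrier)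
  moreover have "y \<otimes>\<^bsub>GG\<^esub> x = \<one>\<^bsub>GG\<^esub>"
  proof -
    have "inv e0 \<otimes> inv (u' a) \<otimes> inv (\<delta> u' u) \<otimes> u' a \<otimes> \<delta> u' u
        = inv e0 \<otimes> (inv (u' a) \<otimes> u' a) \<otimes> (inv (\<delta> u' u) \<otimes> \<delta> u' u)"
      using x u' by (simp only: m_ac cl)
    also have "\<dots> = inv e0" using x u' by simp
    finally have 1: "inv e0 \<otimes> inv (u' a) \<otimes> inv (\<delta> u' u) \<otimes> u' a \<otimes> \<delta> u' u = inv e0" .
    have 2: "u' \<otimes>\<^bsub>Aut\<^esub> u = ONE" using x by (simp add: u'_def Aut.l_inv carrier_Aut)
    show ?thesis using 1 2 x by (simp add: y_def GG_one)
  qed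
  ultimately show "\<exists>y\<in>carrier GG. y \<otimes>\<^bsub>GG\<^esub> x = \<one>\<^bsub>GG\<^esub>" by blast
qed

end

sublocale ectx \<subseteq> G: group "ext_group A U \<delta>" by (rule GG_group)

context ectx begin

abbreviation "EE \<equiv> carrier A \<times> {ONE}"

lemma emb_eq: "emb a = (a \<otimes> inv e0, ONE)"
  by (simp add: ext_emb_def)

lemma emb_in [simp]: "a \<in> carrier A \<Longrightarrow> emb a \<in> carrier GG"
  by (simp add: emb_eq GG_carrier)

lemma emb_mult: "a \<in> carrier A \<Longrightarrow> b \<in> carrier A \<Longrightarrow> emb (a \<otimes> b) = emb a \<otimes>\<^bsub>GG\<^esub> emb b"
proof -
  assume a: "a \<in> carrier A" and b: "b \<in> carrier A"
  have "a \<otimes> inv e0 \<otimes> (b \<otimes> inv e0) \<otimes> e0 = a \<otimes> b \<otimes> inv e0 \<otimes> (inv e0 \<otimes> e0)"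
    using a b by (simp only: m_ac cl)
  also have "\<dots> = a \<otimes> b \<otimes> inv e0" using a b by simp
  finally have eq: "a \<otimes> inv e0 \<otimes> (b \<otimes> inv e0) \<otimes> e0 = a \<otimes> b \<otimes> inv e0" .
  show ?thesis using a b by (simp add: emb_eq eq)
qed

lemma emb_hom: "emb \<in> hom A GG"
  by (rule homI) (auto simp: emb_mult)

lemma emb_ghom: "group_hom A GG emb"
  by (simp add: group_hom_def group_hom_axioms_def emb_hom is_group GG_group)

lemma emb_inj: "inj_on emb (carrier A)"
  by (rule inj_onI) (simp add: emb_eq)

lemma emb_fst: "a \<in> carrier A \<Longrightarrow> emb (a \<otimes> e0) = (a, ONE)"
proof -
  assume a: "a \<in> carrier A"
  have "a \<otimes> e0 \<otimes> inv e0 = a \<otimes> (e0 \<otimes> inv e0)" using a by (simp only: m_ac cl)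
  also have "\<dots> = a" using a by simp
  finally have eq: "a \<otimes> e0 \<otimes> inv e0 = a" .
  show ?thesis using a by (simp add: emb_eq eq)
qed

lemma emb_image: "emb ` carrier A = EE"
proof
  show "emb ` carrier A \<subseteq> EE" by (auto simp: emb_eq)
  show "EE \<subseteq> emb ` carrier A"
  proof
    fix p assume "p \<in> EE"
    then obtain a where "p = (a, ONE)" "a \<in> carrier A" by auto
    thus "p \<in> emb ` carrier A" using emb_fst[of a] by (metis image_eqI m_closed e0_closed)
  qed
qed

lemma emb_inv_into: "p \<in> EE \<Longrightarrow> inv_into (carrier A) emb p = fst p \<otimes> e0"
proof -
  assume p: "p \<in> EE"
  then obtain a where a: "p = (a, ONE)" "a \<in> carrier A" by auto
  show ?thesis using a emb_fst[of a] by (simp add: inv_into_f_eq[OF emb_inj])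
qed

lemma emb_cancel: "a \<in> carrier A \<Longrightarrow> b \<in> carrier A \<Longrightarrow> emb a = emb b \<Longrightarrow> a = b"
  using emb_inj by (auto simp: inj_on_def)

lemma decomp: "a \<in> carrier A \<Longrightarrow> u \<in> U \<Longrightarrow> emb a \<otimes>\<^bsub>GG\<^esub> (\<one>, u) = (a, u)"
proof -
  assume a: "a \<in> carrier A" and u: "u \<in> U"
  have "a \<otimes> inv e0 \<otimes> e0 = a \<otimes> (inv e0 \<otimes> e0)" using a by (simp only: m_ac cl)
  also have "\<dots> = a" using a by simp
  finally have eq: "a \<otimes> inv e0 \<otimes> e0 = a" .
  show ?thesis using a u by (simp add: emb_eq d_one_left[OF u] eq)
qed

lemma emb_left: "c \<in> carrier A \<Longrightarrow> a \<in> carrier A \<Longrightarrow> w \<in> U \<Longrightarrow> emb c \<otimes>\<^bsub>GG\<^esub> (a, w) = (c \<otimes> a, w)"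
proof -
  assume c: "c \<in> carrier A" and a: "a \<in> carrier A" and w: "w \<in> U"
  have "c \<otimes> inv e0 \<otimes> a \<otimes> e0 = c \<otimes> a \<otimes> (inv e0 \<otimes> e0)" using a c by (simp only: m_ac cl)
  also have "\<dots> = c \<otimes> a" using a c by simp
  finally have eq: "c \<otimes> inv e0 \<otimes> a \<otimes> e0 = c \<otimes> a" .
  show ?thesis using a c w by (simp add: emb_eq d_one_left[OF w] eq)
qed

lemma conj_emb: "b \<in> carrier A \<Longrightarrow> v \<in> U \<Longrightarrow> a \<in> carrier A \<Longrightarrow>
    (b, v) \<otimes>\<^bsub>GG\<^esub> emb a = emb (v a) \<otimes>\<^bsub>GG\<^esub> (b, v)"
proof -
  assume b: "b \<in> carrier A" and v: "v \<in> U" and a: "a \<in> carrier A"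
  have "b \<otimes> (v a \<otimes> inv (v e0)) \<otimes> v e0 = v a \<otimes> b \<otimes> (inv (v e0) \<otimes> v e0)"
    using a b v by (simp only: m_ac cl)
  also have "\<dots> = v a \<otimes> b" using a b v by simp
  finally have eq: "b \<otimes> (v a \<otimes> inv (v e0)) \<otimes> v e0 = v a \<otimes> b" .
  have "(b, v) \<otimes>\<^bsub>GG\<^esub> emb a = (v a \<otimes> b, v)" using a b v by (simp add: emb_eq d_one_right[OF v] eq)
  thus ?thesis using emb_left[of "v a" b v] a b v by simp
qed

lemma snd_hom: "snd \<in> hom GG Aut"
  by (rule homI) (auto simp: GG_carrier carrier_Aut)

lemma snd_ghom: "group_hom GG Aut snd"
  by (simp add: group_hom_def group_hom_axioms_def snd_hom GG_group Aut_group)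

end



context ectx begin

lemma EE_kernel: "kernel GG Aut snd = EE"
  by (auto simp: kernel_def GG_carrier)

lemma EE_normal: "EE \<lhd> GG"
  using group_hom.normal_kernel[OF snd_ghom] EE_kernel by simp

lemma EE_sub: "EE \<subseteq> carrier GG"
  by (auto simp: GG_carrier)

lemma auto_GG_hom: "\<alpha> \<in> auto GG \<Longrightarrow> group_hom GG GG \<alpha>"
  by (simp add: auto_def group_hom_def group_hom_axioms_def GG_group)

lemma auto_GG_bij: "\<alpha> \<in> auto GG \<Longrightarrow> bij_betw \<alpha> (carrier GG) (carrier GG)"
  by (simp add: auto_def Bij_def)

lemma UG_group: "group (Aut\<lparr>carrier := U\<rparr>)"
  by (rule subgroup.subgroup_is_group[OF Usg Aut_group])

lemma char_E:
  assumes fin: "finite (carrier A)" and FR: "F_relevant A U" and al: "\<alpha> \<in> auto GG"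
  shows "\<alpha> ` EE = EE"
proof -
  interpret agh: group_hom GG GG \<alpha> by (rule auto_GG_hom[OF al])
  have abij: "bij_betw \<alpha> (carrier GG) (carrier GG)" by (rule auto_GG_bij[OF al])
  define M where "M = \<alpha> ` EE"
  have Msub: "subgroup M GG"
    unfolding M_def by (rule agh.subgroup_img_is_subgroup[OF normal_imp_subgroup[OF EE_normal]])
  have Mc: "M \<subseteq> carrier GG" using subgroup.subset[OF Msub] .
  have Mconj: "x \<otimes>\<^bsub>GG\<^esub> m \<otimes>\<^bsub>GG\<^esub> inv\<^bsub>GG\<^esub> x \<in> M" if x: "x \<in> carrier GG" and m: "m \<in> M" for x m
  proof -
    obtain z where z: "z \<in> carrier GG" "x = \<alpha> z" using x abij by (metis bij_betw_imp_surj_on imageE)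
    obtain p where p: "p \<in> EE" "m = \<alpha> p" using m M_def by auto
    have pc: "p \<in> carrier GG" using p EE_sub by auto
    have "z \<otimes>\<^bsub>GG\<^esub> p \<otimes>\<^bsub>GG\<^esub> inv\<^bsub>GG\<^esub> z \<in> EE"
      using normal.inv_op_closed2[OF EE_normal z(1) p(1)] .
    moreover have "\<alpha> (z \<otimes>\<^bsub>GG\<^esub> p \<otimes>\<^bsub>GG\<^esub> inv\<^bsub>GG\<^esub> z) = x \<otimes>\<^bsub>GG\<^esub> m \<otimes>\<^bsub>GG\<^esub> inv\<^bsub>GG\<^esub> x"
      using z p pc by simp
    ultimately show ?thesis unfolding M_def by (metis image_eqI)
  qed
  have Mnormal: "M \<lhd> GG" using Msub Mconj by (simp add: G.normal_inv_iff)
  have Memb: "M = \<alpha> ` emb ` carrier A" by (simp add: M_def emb_image)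
  have Mcomm: "m1 \<otimes>\<^bsub>GG\<^esub> m2 = m2 \<otimes>\<^bsub>GG\<^esub> m1" if m1M: "m1 \<in> M" and m2M: "m2 \<in> M" for m1 m2
  proof -
    obtain a where a: "a \<in> carrier A" "m1 = \<alpha> (emb a)" using m1M Memb by auto
    obtain b where b: "b \<in> carrier A" "m2 = \<alpha> (emb b)" using m2M Memb by auto
    have "m1 \<otimes>\<^bsub>GG\<^esub> m2 = \<alpha> (emb (a \<otimes> b))" using a b by (simp add: emb_mult)
    also have "\<dots> = \<alpha> (emb (b \<otimes> a))" using a b by (simp add: m_comm)
    also have "\<dots> = m2 \<otimes>\<^bsub>GG\<^esub> m1" using a b by (simp add: emb_mult)
    finally show ?thesis .
  qed
  define B where "B = {b \<in> carrier A. emb b \<in> M}"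
  define N where "N = snd ` M"
  have Nsub: "N \<subseteq> U" using Mc by (auto simp: N_def GG_carrier)
  have fact1: "g a \<otimes> inv a \<in> B" if g: "g \<in> N" and a: "a \<in> carrier A" for g a
  proof -
    obtain x where x: "x \<in> M" "g = snd x" using g N_def by auto
    obtain b where xb: "x = (b, g)" "b \<in> carrier A" "g \<in> U" using x Mc by (cases x) (auto simp: GG_carrier)
    have xc: "x \<in> carrier GG" using x Mc by auto
    have ea: "emb a \<in> carrier GG" using a by simp
    have ega: "emb (g a) \<in> carrier GG" using a xb by simp
    have c1: "x \<otimes>\<^bsub>GG\<^esub> emb a = emb (g a) \<otimes>\<^bsub>GG\<^esub> x" using conj_emb[of b g a] xb a by simp
    have c2: "emb (g a) = x \<otimes>\<^bsub>GG\<^esub> emb a \<otimes>\<^bsub>GG\<^esub> inv\<^bsub>GG\<^esub> x"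
      using c1 xc ea ega by (simp add: G.m_assoc)
    have "emb (g a \<otimes> inv a) = emb (g a) \<otimes>\<^bsub>GG\<^esub> inv\<^bsub>GG\<^esub> (emb a)"
      using a xb by (simp add: emb_mult group_hom.hom_inv[OF emb_ghom])
    also have "\<dots> = x \<otimes>\<^bsub>GG\<^esub> (emb a \<otimes>\<^bsub>GG\<^esub> inv\<^bsub>GG\<^esub> x \<otimes>\<^bsub>GG\<^esub> inv\<^bsub>GG\<^esub> (emb a))"
      using c2 xc ea by (simp add: G.m_assoc)
    also have "\<dots> \<in> M"
    proof -
      have "inv\<^bsub>GG\<^esub> x \<in> M" using x Msub by (simp add: subgroup.m_inv_closed)
      hence "emb a \<otimes>\<^bsub>GG\<^esub> inv\<^bsub>GG\<^esub> x \<otimes>\<^bsub>GG\<^esub> inv\<^bsub>GG\<^esub> (emb a) \<in> M" using Mconj ea by blast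
      thus ?thesis using x Msub by (simp add: subgroup.m_closed)
    qed
    finally show ?thesis using a xb by (simp add: B_def)
  qed
  have fact2: "g b = b" if g: "g \<in> N" and b: "b \<in> B" for g b
  proof -
    obtain x where x: "x \<in> M" "g = snd x" using g N_def by auto
    obtain c where xb: "x = (c, g)" "c \<in> carrier A" "g \<in> U" using x Mc by (cases x) (auto simp: GG_carrier)
    have xc: "x \<in> carrier GG" using x Mc by auto
    have bc: "b \<in> carrier A" "emb b \<in> M" using b B_def by auto
    have "emb (g b) \<otimes>\<^bsub>GG\<^esub> x = x \<otimes>\<^bsub>GG\<^esub> emb b" using conj_emb[of c g b] xb bc by simp
    also have "\<dots> = emb b \<otimes>\<^bsub>GG\<^esub> x" using Mcomm x bc by blast
    finally have "emb (g b) = emb b" using xc bc xb by (simp add: G.r_cancel)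
    thus ?thesis using bc xb by (simp add: emb_cancel)
  qed
  have Nauto: "g \<in> auto A" if "g \<in> N" for g using that Nsub by auto
  have Bsg: "subgroup B A"
  proof (rule subgroupI)
    show "B \<subseteq> carrier A" by (auto simp: B_def)
    have "emb \<one> = \<one>\<^bsub>GG\<^esub>" by (rule group_hom.hom_one[OF emb_ghom])
    hence "\<one> \<in> B" using subgroup.one_closed[OF Msub] by (simp add: B_def)
    thus "B \<noteq> {}" by blast
    fix a assume a: "a \<in> B"
    thus "inv a \<in> B" using subgroup.m_inv_closed[OF Msub]
      by (simp add: B_def group_hom.hom_inv[OF emb_ghom])
    fix b assume b: "b \<in> B"
    thus "a \<otimes> b \<in> B" using a subgroup.m_closed[OF Msub] by (simp add: B_def emb_mult)
  qed
  have Bsub: "B \<subseteq> carrier A" "\<one> \<in> B" using subgroup.subset[OF Bsg] subgroup.one_closed[OF Bsg] by auto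
  have Ninv: "g ` B = B" if "g \<in> N" for g using fact2[OF that] by (auto simp: image_iff)
  have Ninv1: "g ` {\<one>} = {\<one>}" if "g \<in> N" for g using Nauto[OF that] by simp
  have NinvA: "g ` carrier A = carrier A" if "g \<in> N" for g
    using Nauto[OF that] by (simp add: auto_def Bij_def bij_betw_def)
  have NsgAut: "subgroup N Aut" unfolding N_def by (rule group_hom.subgroup_img_is_subgroup[OF snd_ghom Msub])
  have NsgU: "subgroup N (Aut\<lparr>carrier := U\<rparr>)" by (rule Aut.subgroup_incl[OF NsgAut Usg Nsub])
  have Nnormal: "N \<lhd> Aut\<lparr>carrier := U\<rparr>"
  proof -
    have "v \<otimes>\<^bsub>Aut\<^esub> n \<otimes>\<^bsub>Aut\<^esub> inv\<^bsub>Aut\<^esub> v \<in> N" if v: "v \<in> U" and n: "n \<in> N" for v n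
    proof -
      obtain x where x: "x \<in> M" "n = snd x" using n N_def by auto
      have xc: "x \<in> carrier GG" using x Mc by auto
      have y: "(\<one>, v) \<in> carrier GG" using v by (simp add: GG_carrier)
      have "(\<one>, v) \<otimes>\<^bsub>GG\<^esub> x \<otimes>\<^bsub>GG\<^esub> inv\<^bsub>GG\<^esub> (\<one>, v) \<in> M" using Mconj[OF y x(1)] .
      moreover have "snd ((\<one>, v) \<otimes>\<^bsub>GG\<^esub> x \<otimes>\<^bsub>GG\<^esub> inv\<^bsub>GG\<^esub> (\<one>, v)) = v \<otimes>\<^bsub>Aut\<^esub> n \<otimes>\<^bsub>Aut\<^esub> inv\<^bsub>Aut\<^esub> v"
        using y xc x(2) by (simp add: group_hom.hom_mult[OF snd_ghom] group_hom.hom_inv[OF snd_ghom])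
      ultimately show ?thesis unfolding N_def by (metis image_eqI)
    qed
    thus ?thesis using NsgU UG_group Usg
      by (simp add: group.normal_inv_iff[OF UG_group])
  qed
  have series: "centralizes_series A N"
  proof (cases "carrier A = {\<one>}")
    case True
    show ?thesis unfolding centralizes_series_def
      apply (rule exI[of _ 0], rule exI[of _ "\<lambda>_. carrier A"])
      using True NinvA subgroup_self by auto
  next
    case nt: False
    have Aone: "{\<one>} \<subset> carrier A" using nt by auto
    show ?thesis
    proof (cases "B = {\<one>} \<or> B = carrier A")
      case True
      have triv: "g a \<otimes> inv a \<in> {\<one>}" if g: "g \<in> N" and a: "a \<in> carrier A" for g a
      proof (cases "B = {\<one>}")
        case True thus ?thesis using fact1[OF g a] by simp
      next
        case False
        hence "B = carrier A" using \<open>B = {\<one>} \<or> B = carrier A\<close> by simp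
        hence "g a = a" using fact2[OF g] a by simp
        thus ?thesis using a by simp
      qed
      show ?thesis unfolding centralizes_series_def
        apply (rule exI[of _ 1], rule exI[of _ "\<lambda>i. if i = 0 then carrier A else {\<one>}"])
        using Aone NinvA Ninv1 subgroup_self triv_subgroup triv by (auto simp: le_Suc_eq)
    next
      case False
      have s1: "B \<subset> carrier A" using False Bsub by auto
      have s2: "{\<one>} \<subset> B" using False Bsub by auto
      have triv: "g a \<otimes> inv a \<in> {\<one>}" if g: "g \<in> N" and a: "a \<in> B" for g a
        using fact2[OF g a] a Bsub by auto
      show ?thesis unfolding centralizes_series_def
        apply (rule exI[of _ 2], rule exI[of _ "\<lambda>i. if i = 0 then carrier A else if i = 1 then B else {\<one>}"])
        apply (intro conjI)
        using s1 s2 NinvA Ninv Ninv1 subgroup_self triv_subgroup Bsg triv fact1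
        by (auto simp: le_Suc_eq less_Suc_eq numeral_2_eq_2)
    qed
  qed
  have Ntriv: "N = {ONE}"
    using FR Nnormal series unfolding F_relevant_def by blast
  have MEE: "M \<subseteq> EE"
  proof
    fix x assume x: "x \<in> M"
    hence "snd x \<in> N" by (simp add: N_def)
    hence "snd x = ONE" using Ntriv by simp
    moreover have "fst x \<in> carrier A" using x Mc by (auto simp: GG_carrier)
    ultimately show "x \<in> EE" by (cases x) auto
  qed
  have "card M = card EE"
    unfolding M_def
    by (rule card_image, rule inj_on_subset[OF bij_betw_imp_inj_on[OF abij] EE_sub])
  moreover have "finite EE" using fin by simp
  ultimately have "M = EE" using MEE card_subset_eq by blast
  thus ?thesis by (simp add: M_def)
qed

end



context group begin

lemma gconj1: "g \<in> carrier G \<Longrightarrow> u \<in> carrier G \<Longrightarrow> inv g \<otimes> (g \<otimes> u \<otimes> inv g) \<otimes> g = u"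
proof -
  assume g: "g \<in> carrier G" and u: "u \<in> carrier G"
  have "inv g \<otimes> (g \<otimes> u \<otimes> inv g) \<otimes> g = (inv g \<otimes> g) \<otimes> u \<otimes> (inv g \<otimes> g)"
    using g u by (simp only: m_assoc inv_closed m_closed)
  also have "\<dots> = u" using g u by simp
  finally show ?thesis .
qed

lemma gconj2: "g \<in> carrier G \<Longrightarrow> u \<in> carrier G \<Longrightarrow> g \<otimes> (inv g \<otimes> u \<otimes> g) \<otimes> inv g = u"
  using gconj1[of "inv g" u] by simp

lemma gconj3: "g \<in> carrier G \<Longrightarrow> u \<in> carrier G \<Longrightarrow> v \<in> carrier G \<Longrightarrow>
   g \<otimes> (u \<otimes> v) \<otimes> inv g = (g \<otimes> u \<otimes> inv g) \<otimes> (g \<otimes> v \<otimes> inv g)"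
proof -
  assume g: "g \<in> carrier G" and u: "u \<in> carrier G" and v: "v \<in> carrier G"
  have "(g \<otimes> u \<otimes> inv g) \<otimes> (g \<otimes> v \<otimes> inv g) = g \<otimes> u \<otimes> (inv g \<otimes> g) \<otimes> v \<otimes> inv g"
    using g u v by (simp only: m_assoc inv_closed m_closed)
  also have "\<dots> = g \<otimes> u \<otimes> v \<otimes> inv g" using g u v by simp
  also have "\<dots> = g \<otimes> (u \<otimes> v) \<otimes> inv g" using g u v by (simp add: m_assoc)
  finally show ?thesis by simp
qed

lemma gconj4: "g \<in> carrier G \<Longrightarrow> u \<in> carrier G \<Longrightarrow> u' \<in> carrier G \<Longrightarrow> u' \<otimes> g = g \<otimes> u \<Longrightarrow> u' = g \<otimes> u \<otimes> inv g"
proof -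
  assume g: "g \<in> carrier G" and u: "u \<in> carrier G" and u': "u' \<in> carrier G" and e: "u' \<otimes> g = g \<otimes> u"
  have "u' = u' \<otimes> g \<otimes> inv g" using g u' by (simp add: m_assoc)
  also have "\<dots> = g \<otimes> u \<otimes> inv g" using e by simp
  finally show ?thesis .
qed

end

context ectx begin

lemma cob_closed [simp]: "f \<in> U \<rightarrow> carrier A \<Longrightarrow> u \<in> U \<Longrightarrow> v \<in> U \<Longrightarrow> cobound2 A f u v \<in> carrier A"
  by (simp add: cobound2_def Pi_iff)

lemma cob_mult: "f \<in> U \<rightarrow> carrier A \<Longrightarrow> f' \<in> U \<rightarrow> carrier A \<Longrightarrow> u \<in> U \<Longrightarrow> v \<in> U \<Longrightarrow>
   cobound2 A (\<lambda>w. f w \<otimes> f' w) u v = cobound2 A f u v \<otimes> cobound2 A f' u v"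
proof -
  assume f: "f \<in> U \<rightarrow> carrier A" and f': "f' \<in> U \<rightarrow> carrier A" and u: "u \<in> U" and v: "v \<in> U"
  have c: "f u \<in> carrier A" "f v \<in> carrier A" "f (u \<otimes>\<^bsub>Aut\<^esub> v) \<in> carrier A"
          "f' u \<in> carrier A" "f' v \<in> carrier A" "f' (u \<otimes>\<^bsub>Aut\<^esub> v) \<in> carrier A"
    using f f' u v by auto
  show ?thesis using c u v by (simp add: cobound2_def inv_mult m_ac)
qed

lemma cob_inv: "f \<in> U \<rightarrow> carrier A \<Longrightarrow> u \<in> U \<Longrightarrow> v \<in> U \<Longrightarrow>
   cobound2 A (\<lambda>w. inv (f w)) u v = inv (cobound2 A f u v)"
proof -
  assume f: "f \<in> U \<rightarrow> carrier A" and u: "u \<in> U" and v: "v \<in> U"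
  have c: "f u \<in> carrier A" "f v \<in> carrier A" "f (u \<otimes>\<^bsub>Aut\<^esub> v) \<in> carrier A"
    using f u v by auto
  show ?thesis using c u v by (simp add: cobound2_def inv_mult m_ac)
qed

lemma class_shift:
  assumes f: "f \<in> U \<rightarrow> carrier A"
    and eq: "\<And>u v. u \<in> U \<Longrightarrow> v \<in> U \<Longrightarrow> \<delta>' u v = \<delta> u v \<otimes> cobound2 A f u v"
  shows "H2class A U \<delta>' = H2class A U \<delta>"
proof
  show "H2class A U \<delta>' \<subseteq> H2class A U \<delta>"
  proof
    fix d assume d: "d \<in> H2class A U \<delta>'"
    then obtain f' where f': "f' \<in> U \<rightarrow> carrier A" "\<forall>u\<in>U. \<forall>v\<in>U. d u v = \<delta>' u v \<otimes> cobound2 A f' u v"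
      and dZ': "d \<in> Z2 A U" by (auto simp: H2class_def)
    have ff: "(\<lambda>w. f w \<otimes> f' w) \<in> U \<rightarrow> carrier A" using f f' by auto
    have "d u v = \<delta> u v \<otimes> cobound2 A (\<lambda>w. f w \<otimes> f' w) u v" if u: "u \<in> U" and v: "v \<in> U" for u v
      using f'(2) u v eq[OF u v] cob_mult[OF f f'(1) u v] f f'(1) by (simp add: m_assoc)
    thus "d \<in> H2class A U \<delta>" using dZ' ff by (auto simp: H2class_def)
  qed
next
  show "H2class A U \<delta> \<subseteq> H2class A U \<delta>'"
  proof
    fix d assume d: "d \<in> H2class A U \<delta>"
    then obtain f' where f': "f' \<in> U \<rightarrow> carrier A" "\<forall>u\<in>U. \<forall>v\<in>U. d u v = \<delta> u v \<otimes> cobound2 A f' u v"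
      and dZ': "d \<in> Z2 A U" by (auto simp: H2class_def)
    have fi: "(\<lambda>w. inv (f w)) \<in> U \<rightarrow> carrier A" using f by auto
    have ff: "(\<lambda>w. inv (f w) \<otimes> f' w) \<in> U \<rightarrow> carrier A" using f f' by auto
    have "d u v = \<delta>' u v \<otimes> cobound2 A (\<lambda>w. inv (f w) \<otimes> f' w) u v" if u: "u \<in> U" and v: "v \<in> U" for u v
    proof -
      have cc: "cobound2 A f u v \<in> carrier A" "cobound2 A f' u v \<in> carrier A" using f f'(1) u v by auto
      have "\<delta>' u v \<otimes> cobound2 A (\<lambda>w. inv (f w) \<otimes> f' w) u v
          = \<delta> u v \<otimes> cobound2 A f u v \<otimes> (inv (cobound2 A f u v) \<otimes> cobound2 A f' u v)"
        using eq[OF u v] cob_mult[OF fi f'(1) u v] cob_inv[OF f u v] by simp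
      also have "\<dots> = \<delta> u v \<otimes> (cobound2 A f u v \<otimes> inv (cobound2 A f u v)) \<otimes> cobound2 A f' u v"
        using cc u v by (simp only: m_assoc inv_closed d_closed m_closed)
      also have "\<dots> = d u v" using cc u v f'(2) by simp
      finally show ?thesis by simp
    qed
    thus "d \<in> H2class A U \<delta>'" using dZ' ff by (auto simp: H2class_def)
  qed
qed

lemma self_class: "\<delta> \<in> H2class A U \<delta>"
proof -
  have "(\<lambda>w. \<one>) \<in> U \<rightarrow> carrier A" by auto
  moreover have "\<forall>u\<in>U. \<forall>v\<in>U. \<delta> u v = \<delta> u v \<otimes> cobound2 A (\<lambda>w. \<one>) u v"
    by (simp add: cobound2_def)
  ultimately show ?thesis using dZ by (auto simp: H2class_def)
qed

end



locale ectx2 = ectx +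
  assumes fin: "finite (carrier A)" and FR: "F_relevant A U"

context ectx2 begin

abbreviation "rho \<equiv> restr_A A \<delta>"
abbreviation "AG \<equiv> AutoGroup GG"

lemma AG_carrier: "carrier AG = auto GG"
  by (simp add: AutoGroup_def)

lemma AG_mult: "\<alpha> \<in> auto GG \<Longrightarrow> \<beta> \<in> auto GG \<Longrightarrow> \<alpha> \<otimes>\<^bsub>AG\<^esub> \<beta> = compose (carrier GG) \<alpha> \<beta>"
  by (simp add: AutoGroup_def BijGroup_def auto_def)

lemma AG_group: "group AG" by (rule G.AutoGroup)

lemma AG_closed: "\<alpha> \<in> auto GG \<Longrightarrow> \<beta> \<in> auto GG \<Longrightarrow> compose (carrier GG) \<alpha> \<beta> \<in> auto GG"
  using monoid.m_closed[OF group.is_monoid[OF AG_group], of \<alpha> \<beta>] by (simp add: AG_carrier AG_mult)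

lemma autoGG_hom: "\<alpha> \<in> auto GG \<Longrightarrow> \<alpha> \<in> hom GG GG"
  by (simp add: auto_def)

lemma autoGG_closed: "\<alpha> \<in> auto GG \<Longrightarrow> x \<in> carrier GG \<Longrightarrow> \<alpha> x \<in> carrier GG"
  by (auto simp: auto_def hom_def)

lemma autoGG_mult: "\<alpha> \<in> auto GG \<Longrightarrow> x \<in> carrier GG \<Longrightarrow> y \<in> carrier GG \<Longrightarrow> \<alpha> (x \<otimes>\<^bsub>GG\<^esub> y) = \<alpha> x \<otimes>\<^bsub>GG\<^esub> \<alpha> y"
  by (rule hom_mult[OF autoGG_hom])

lemma rho_apply: assumes al: "\<alpha> \<in> auto GG" and a: "a \<in> carrier A"
  shows "rho \<alpha> a \<in> carrier A" "emb (rho \<alpha> a) = \<alpha> (emb a)"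
proof -
  have ea: "emb a \<in> EE" using a by (simp add: emb_eq)
  have "\<alpha> (emb a) \<in> \<alpha> ` EE" using ea by (rule imageI)
  hence p: "\<alpha> (emb a) \<in> EE" by (simp only: char_E[OF fin FR al])
  define b where "b = fst (\<alpha> (emb a))"
  have b: "\<alpha> (emb a) = (b, ONE)" "b \<in> carrier A" using p by (auto simp: b_def mem_Times_iff prod_eq_iff)
  have "rho \<alpha> a = inv_into (carrier A) emb (\<alpha> (emb a))" using a by (simp add: restr_A_def)
  also have "\<dots> = fst (\<alpha> (emb a)) \<otimes> e0" by (rule emb_inv_into[OF p])
  also have "\<dots> = b \<otimes> e0" using b(1) by simp
  finally have r: "rho \<alpha> a = b \<otimes> e0" .
  show "rho \<alpha> a \<in> carrier A" using r b by simp
  show "emb (rho \<alpha> a) = \<alpha> (emb a)" using r b(1) emb_fst[OF b(2)] by simp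
qed

lemma rho_ext: "rho \<alpha> \<in> extensional (carrier A)"
  by (simp add: restr_A_def)

lemma rho_auto: assumes al: "\<alpha> \<in> auto GG" shows "rho \<alpha> \<in> auto A"
proof -
  have inj: "inj_on \<alpha> (carrier GG)" using auto_GG_bij[OF al] by (simp add: bij_betw_def)
  have hom: "rho \<alpha> \<in> hom A A"
  proof (rule homI)
    fix a assume "a \<in> carrier A" thus "rho \<alpha> a \<in> carrier A" using rho_apply[OF al] by blast
  next
    fix a b assume a: "a \<in> carrier A" and b: "b \<in> carrier A"
    have "emb (rho \<alpha> (a \<otimes> b)) = emb (rho \<alpha> a \<otimes> rho \<alpha> b)"
      using a b rho_apply[OF al] by (simp add: emb_mult autoGG_mult[OF al])
    thus "rho \<alpha> (a \<otimes> b) = rho \<alpha> a \<otimes> rho \<alpha> b"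
      using a b rho_apply[OF al] by (intro emb_cancel) auto
  qed
  have injr: "inj_on (rho \<alpha>) (carrier A)"
  proof (rule inj_onI)
    fix a b assume a: "a \<in> carrier A" and b: "b \<in> carrier A" and e: "rho \<alpha> a = rho \<alpha> b"
    hence "\<alpha> (emb a) = \<alpha> (emb b)" using rho_apply[OF al a] rho_apply[OF al b] by metis
    hence "emb a = emb b" using inj a b by (simp add: inj_on_def)
    thus "a = b" using a b emb_cancel by blast
  qed
  have surj: "rho \<alpha> ` carrier A = carrier A"
  proof
    show "rho \<alpha> ` carrier A \<subseteq> carrier A" using rho_apply[OF al] by blast
    show "carrier A \<subseteq> rho \<alpha> ` carrier A"
    proof
      fix b assume b: "b \<in> carrier A"
      have "emb b \<in> EE" using b emb_image by blast
      hence "emb b \<in> \<alpha> ` EE" using char_E[OF fin FR al] by simp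
      then obtain a where a: "a \<in> carrier A" "emb b = \<alpha> (emb a)" using emb_image by (metis imageE)
      hence "emb b = emb (rho \<alpha> a)" using rho_apply[OF al a(1)] by simp
      hence "b = rho \<alpha> a" using b rho_apply[OF al a(1)] emb_cancel by blast
      thus "b \<in> rho \<alpha> ` carrier A" using a by blast
    qed
  qed
  show ?thesis using hom injr surj rho_ext by (simp add: auto_def Bij_def bij_betw_def)
qed

lemma rho_hom: "rho \<in> hom AG Aut"
proof (rule homI)
  fix \<alpha> assume "\<alpha> \<in> carrier AG" thus "rho \<alpha> \<in> carrier Aut" by (simp add: AG_carrier carrier_Aut rho_auto)
next
  fix \<alpha> \<beta> assume al: "\<alpha> \<in> carrier AG" and be: "\<beta> \<in> carrier AG"
  hence al': "\<alpha> \<in> auto GG" and be': "\<beta> \<in> auto GG" by (auto simp: AG_carrier)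
  have ab: "compose (carrier GG) \<alpha> \<beta> \<in> auto GG" by (rule AG_closed[OF al' be'])
  show "rho (\<alpha> \<otimes>\<^bsub>AG\<^esub> \<beta>) = rho \<alpha> \<otimes>\<^bsub>Aut\<^esub> rho \<beta>"
  proof (simp only: AG_mult[OF al' be'], rule auto_eqI[OF rho_auto[OF ab] auto_mult_auto[OF rho_auto[OF al'] rho_auto[OF be']]])
    fix a assume a: "a \<in> carrier A"
    have "emb (rho (compose (carrier GG) \<alpha> \<beta>) a) = \<alpha> (\<beta> (emb a))"
      using rho_apply[OF ab a] a by (simp add: compose_def)
    also have "\<dots> = \<alpha> (emb (rho \<beta> a))" using rho_apply[OF be' a] by simp
    also have "\<dots> = emb (rho \<alpha> (rho \<beta> a))" using rho_apply[OF al' rho_apply(1)[OF be' a]] by simp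
    finally have "rho (compose (carrier GG) \<alpha> \<beta>) a = rho \<alpha> (rho \<beta> a)"
      using emb_cancel rho_apply[OF ab a] rho_apply[OF al' rho_apply(1)[OF be' a]] by blast
    thus "rho (compose (carrier GG) \<alpha> \<beta>) a = (rho \<alpha> \<otimes>\<^bsub>Aut\<^esub> rho \<beta>) a"
      using a rho_auto[OF al'] rho_auto[OF be'] by (simp add: Aut_mult_apply)
  qed
qed

lemma rho_conj: assumes al: "\<alpha> \<in> auto GG" and x: "x \<in> carrier GG"
  shows "snd (\<alpha> x) \<otimes>\<^bsub>Aut\<^esub> rho \<alpha> = rho \<alpha> \<otimes>\<^bsub>Aut\<^esub> snd x"
proof -
  obtain b u where xb: "x = (b, u)" "b \<in> carrier A" "u \<in> U" using x by (cases x) (auto simp: GG_carrier)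
  have ax: "\<alpha> x \<in> carrier GG" using autoGG_closed[OF al x] .
  obtain b' u' where yb: "\<alpha> x = (b', u')" "b' \<in> carrier A" "u' \<in> U" using ax by (cases "\<alpha> x") (auto simp: GG_carrier)
  have g: "rho \<alpha> \<in> auto A" by (rule rho_auto[OF al])
  show ?thesis
  proof (rule auto_eqI)
    show "snd (\<alpha> x) \<otimes>\<^bsub>Aut\<^esub> rho \<alpha> \<in> auto A" using yb g by simp
    show "rho \<alpha> \<otimes>\<^bsub>Aut\<^esub> snd x \<in> auto A" using xb g by simp
    fix a assume a: "a \<in> carrier A"
    have ga: "rho \<alpha> a \<in> carrier A" "emb (rho \<alpha> a) = \<alpha> (emb a)" using rho_apply[OF al a] by auto
    have gua: "rho \<alpha> (u a) \<in> carrier A" "emb (rho \<alpha> (u a)) = \<alpha> (emb (u a))" using rho_apply[OF al, of "u a"] a xb by auto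
    have "emb (u' (rho \<alpha> a)) \<otimes>\<^bsub>GG\<^esub> \<alpha> x = \<alpha> x \<otimes>\<^bsub>GG\<^esub> emb (rho \<alpha> a)"
      using conj_emb[of b' u' "rho \<alpha> a"] yb ga by simp
    also have "\<dots> = \<alpha> (x \<otimes>\<^bsub>GG\<^esub> emb a)" using ga a x by (simp add: autoGG_mult[OF al])
    also have "\<dots> = \<alpha> (emb (u a) \<otimes>\<^bsub>GG\<^esub> x)" using conj_emb[of b u a] xb a by simp
    also have "\<dots> = emb (rho \<alpha> (u a)) \<otimes>\<^bsub>GG\<^esub> \<alpha> x" using gua a x xb by (simp add: autoGG_mult[OF al])
    finally have "emb (u' (rho \<alpha> a)) = emb (rho \<alpha> (u a))"
      using ax ga gua yb emb_in[of "rho \<alpha> (u a)"] emb_in[of "u' (rho \<alpha> a)"] by (simp add: G.r_cancel)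
    hence "u' (rho \<alpha> a) = rho \<alpha> (u a)" using emb_cancel ga gua yb by simp
    thus "(snd (\<alpha> x) \<otimes>\<^bsub>Aut\<^esub> rho \<alpha>) a = (rho \<alpha> \<otimes>\<^bsub>Aut\<^esub> snd x) a"
      using a yb xb g by (simp add: Aut_mult_apply)
  qed
qed

lemma rho_snd: assumes al: "\<alpha> \<in> auto GG" and x: "x \<in> carrier GG"
  shows "snd (\<alpha> x) = rho \<alpha> \<otimes>\<^bsub>Aut\<^esub> snd x \<otimes>\<^bsub>Aut\<^esub> inv\<^bsub>Aut\<^esub> (rho \<alpha>)"
proof -
  have ax: "\<alpha> x \<in> carrier GG" using autoGG_closed[OF al x] .
  have s1: "snd (\<alpha> x) \<in> carrier Aut" using ax by (auto simp: GG_carrier carrier_Aut)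
  have s2: "snd x \<in> carrier Aut" using x by (auto simp: GG_carrier carrier_Aut)
  show ?thesis using Aut.gconj4[OF _ s2 s1 rho_conj[OF al x]] rho_auto[OF al] by (simp add: carrier_Aut)
qed

end



context ectx begin

lemma NAut_auto: "g \<in> NAut A U \<Longrightarrow> g \<in> auto A"
  by (simp add: NAut_def)

lemma NAut_conj1: "g \<in> NAut A U \<Longrightarrow> u \<in> U \<Longrightarrow> g \<otimes>\<^bsub>Aut\<^esub> u \<otimes>\<^bsub>Aut\<^esub> inv\<^bsub>Aut\<^esub> g \<in> U"
  by (auto simp: NAut_def)

lemma NAut_conj2: assumes g: "g \<in> NAut A U" and u: "u \<in> U"
  shows "inv\<^bsub>Aut\<^esub> g \<otimes>\<^bsub>Aut\<^esub> u \<otimes>\<^bsub>Aut\<^esub> g \<in> U"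
proof -
  have "u \<in> (\<lambda>u. g \<otimes>\<^bsub>Aut\<^esub> u \<otimes>\<^bsub>Aut\<^esub> inv\<^bsub>Aut\<^esub> g) ` U" using g u by (simp add: NAut_def)
  then obtain w where w: "w \<in> U" "u = g \<otimes>\<^bsub>Aut\<^esub> w \<otimes>\<^bsub>Aut\<^esub> inv\<^bsub>Aut\<^esub> g" by auto
  have "inv\<^bsub>Aut\<^esub> g \<otimes>\<^bsub>Aut\<^esub> u \<otimes>\<^bsub>Aut\<^esub> g = w"
    using w Aut.gconj1[of g w] NAut_auto[OF g] by (simp add: carrier_Aut)
  thus ?thesis using w by simp
qed

end

context ectx2 begin

lemma rho_NAut: assumes al: "\<alpha> \<in> auto GG" shows "rho \<alpha> \<in> NAut A U"
proof -
  have g: "rho \<alpha> \<in> auto A" by (rule rho_auto[OF al])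
  have "(\<lambda>u. rho \<alpha> \<otimes>\<^bsub>Aut\<^esub> u \<otimes>\<^bsub>Aut\<^esub> inv\<^bsub>Aut\<^esub> (rho \<alpha>)) ` U = U"
  proof
    show "(\<lambda>u. rho \<alpha> \<otimes>\<^bsub>Aut\<^esub> u \<otimes>\<^bsub>Aut\<^esub> inv\<^bsub>Aut\<^esub> (rho \<alpha>)) ` U \<subseteq> U"
    proof
      fix y assume "y \<in> (\<lambda>u. rho \<alpha> \<otimes>\<^bsub>Aut\<^esub> u \<otimes>\<^bsub>Aut\<^esub> inv\<^bsub>Aut\<^esub> (rho \<alpha>)) ` U"
      then obtain u where u: "u \<in> U" "y = rho \<alpha> \<otimes>\<^bsub>Aut\<^esub> u \<otimes>\<^bsub>Aut\<^esub> inv\<^bsub>Aut\<^esub> (rho \<alpha>)" by auto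
      have x: "(\<one>, u) \<in> carrier GG" using u by (simp add: GG_carrier)
      have "y = snd (\<alpha> (\<one>, u))" using rho_snd[OF al x] u by simp
      moreover have "\<alpha> (\<one>, u) \<in> carrier GG" using autoGG_closed[OF al x] .
      ultimately show "y \<in> U" by (auto simp: GG_carrier mem_Times_iff)
    qed
    show "U \<subseteq> (\<lambda>u. rho \<alpha> \<otimes>\<^bsub>Aut\<^esub> u \<otimes>\<^bsub>Aut\<^esub> inv\<^bsub>Aut\<^esub> (rho \<alpha>)) ` U"
    proof
      fix v assume v: "v \<in> U"
      have "(\<one>, v) \<in> carrier GG" using v by (simp add: GG_carrier)
      hence "(\<one>, v) \<in> \<alpha> ` carrier GG" using auto_GG_bij[OF al] by (simp add: bij_betw_def)
      then obtain x where x: "x \<in> carrier GG" "\<alpha> x = (\<one>, v)" by auto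
      have "v = rho \<alpha> \<otimes>\<^bsub>Aut\<^esub> snd x \<otimes>\<^bsub>Aut\<^esub> inv\<^bsub>Aut\<^esub> (rho \<alpha>)" using rho_snd[OF al x(1)] x(2) by simp
      moreover have "snd x \<in> U" using x(1) by (auto simp: GG_carrier mem_Times_iff)
      ultimately show "v \<in> (\<lambda>u. rho \<alpha> \<otimes>\<^bsub>Aut\<^esub> u \<otimes>\<^bsub>Aut\<^esub> inv\<^bsub>Aut\<^esub> (rho \<alpha>)) ` U" by blast
    qed
  qed
  thus ?thesis using g by (simp add: NAut_def)
qed

lemma rho_Stab: assumes al: "\<alpha> \<in> auto GG" shows "rho \<alpha> \<in> Stab A U \<delta>"
proof -
  define g where "g = rho \<alpha>"
  have gN: "g \<in> NAut A U" using rho_NAut[OF al] by (simp add: g_def)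
  have g: "g \<in> auto A" using rho_auto[OF al] by (simp add: g_def)
  have gc: "g \<in> carrier Aut" using g by (simp add: carrier_Aut)
  define ci where "ci = (\<lambda>u. inv\<^bsub>Aut\<^esub> g \<otimes>\<^bsub>Aut\<^esub> u \<otimes>\<^bsub>Aut\<^esub> g)"
  define f where "f = (\<lambda>u0. fst (\<alpha> (\<one>, ci u0)))"
  have ciU: "ci u0 \<in> U" if "u0 \<in> U" for u0 using NAut_conj2[OF gN that] by (simp add: ci_def)
  have cc: "g \<otimes>\<^bsub>Aut\<^esub> ci u0 \<otimes>\<^bsub>Aut\<^esub> inv\<^bsub>Aut\<^esub> g = u0" if "u0 \<in> U" for u0
    using Aut.gconj2[OF gc, of u0] that by (simp add: ci_def carrier_Aut)
  have xin: "(\<one>, ci u0) \<in> carrier GG" if "u0 \<in> U" for u0 using ciU[OF that] by (simp add: GG_carrier)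
  have alu: "\<alpha> (\<one>, ci u0) = (f u0, u0)" if u0: "u0 \<in> U" for u0
  proof -
    have "snd (\<alpha> (\<one>, ci u0)) = u0" using rho_snd[OF al xin[OF u0]] cc[OF u0] by (simp add: g_def)
    thus ?thesis by (simp add: f_def prod_eq_iff)
  qed
  have fU: "f \<in> U \<rightarrow> carrier A"
  proof
    fix u0 assume u0: "u0 \<in> U"
    show "f u0 \<in> carrier A" using autoGG_closed[OF al xin[OF u0]] alu[OF u0] by (simp add: GG_carrier)
  qed
  have main: "act2 A g \<delta> u0 v0 = \<delta> u0 v0 \<otimes> cobound2 A f u0 v0" if u0: "u0 \<in> U" and v0: "v0 \<in> U" for u0 v0
  proof -
    define u where "u = ci u0"
    define v where "v = ci v0"
    have u: "u \<in> U" and v: "v \<in> U" using ciU u0 v0 by (auto simp: u_def v_def)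
    have ciuv: "ci (u0 \<otimes>\<^bsub>Aut\<^esub> v0) = u \<otimes>\<^bsub>Aut\<^esub> v"
      using Aut.gconj3[of "inv\<^bsub>Aut\<^esub> g" u0 v0] gc u0 v0 by (simp add: ci_def u_def v_def carrier_Aut)
    have uv0: "u0 \<otimes>\<^bsub>Aut\<^esub> v0 \<in> U" using u0 v0 by simp
    have fuv: "\<alpha> (\<one>, u \<otimes>\<^bsub>Aut\<^esub> v) = (f (u0 \<otimes>\<^bsub>Aut\<^esub> v0), u0 \<otimes>\<^bsub>Aut\<^esub> v0)"
      using alu[OF uv0] ciuv by simp
    have dc: "\<delta> u v \<in> carrier A" using u v by simp
    have prod: "(\<one>, u) \<otimes>\<^bsub>GG\<^esub> (\<one>, v) = emb (\<delta> u v) \<otimes>\<^bsub>GG\<^esub> (\<one>, u \<otimes>\<^bsub>Aut\<^esub> v)"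
      using decomp[OF dc, of "u \<otimes>\<^bsub>Aut\<^esub> v"] u v by simp
    have x1: "(\<one>, u) \<in> carrier GG" "(\<one>, v) \<in> carrier GG" "(\<one>, u \<otimes>\<^bsub>Aut\<^esub> v) \<in> carrier GG"
      using u v by (auto simp: GG_carrier)
    have "\<alpha> (\<one>, u) \<otimes>\<^bsub>GG\<^esub> \<alpha> (\<one>, v) = \<alpha> (emb (\<delta> u v)) \<otimes>\<^bsub>GG\<^esub> \<alpha> (\<one>, u \<otimes>\<^bsub>Aut\<^esub> v)"
      using prod x1 dc by (simp add: autoGG_mult[OF al, symmetric])
    also have "\<dots> = emb (g (\<delta> u v)) \<otimes>\<^bsub>GG\<^esub> (f (u0 \<otimes>\<^bsub>Aut\<^esub> v0), u0 \<otimes>\<^bsub>Aut\<^esub> v0)"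
      using rho_apply[OF al dc] fuv by (simp add: g_def)
    also have "\<dots> = (g (\<delta> u v) \<otimes> f (u0 \<otimes>\<^bsub>Aut\<^esub> v0), u0 \<otimes>\<^bsub>Aut\<^esub> v0)"
      using emb_left[of "g (\<delta> u v)" "f (u0 \<otimes>\<^bsub>Aut\<^esub> v0)" "u0 \<otimes>\<^bsub>Aut\<^esub> v0"] g dc uv0 fU by (auto simp: Pi_iff)
    finally have E1: "f u0 \<otimes> u0 (f v0) \<otimes> \<delta> u0 v0 = g (\<delta> u v) \<otimes> f (u0 \<otimes>\<^bsub>Aut\<^esub> v0)"
      using alu[OF u0] alu[OF v0] by (simp add: u_def v_def)
    have fc: "f u0 \<in> carrier A" "f v0 \<in> carrier A" "f (u0 \<otimes>\<^bsub>Aut\<^esub> v0) \<in> carrier A"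
      using fU u0 v0 uv0 by auto
    have gd: "g (\<delta> u v) \<in> carrier A" using g dc by simp
    have E2: "g (\<delta> u v) = f u0 \<otimes> u0 (f v0) \<otimes> \<delta> u0 v0 \<otimes> inv f (u0 \<otimes>\<^bsub>Aut\<^esub> v0)"
      using E1 fc gd u0 v0 by (simp add: inv_solve_right)
    also have "\<dots> = \<delta> u0 v0 \<otimes> cobound2 A f u0 v0"
      using fc u0 v0 by (simp add: cobound2_def m_ac)
    finally have "g (\<delta> u v) = \<delta> u0 v0 \<otimes> cobound2 A f u0 v0" .
    moreover have "act2 A g \<delta> u0 v0 = g (\<delta> u v)" by (simp add: act2_def u_def v_def ci_def)
    ultimately show ?thesis by simp
  qed
  have "H2class A U (act2 A g \<delta>) = H2class A U \<delta>" by (rule class_shift[OF fU main])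
  thus ?thesis using gN by (simp add: Stab_def g_def)
qed

end



context ectx2 begin

lemma Stab_lift: assumes gS: "g \<in> Stab A U \<delta>" shows "g \<in> rho ` auto GG"
proof -
  have gN: "g \<in> NAut A U" and cls: "H2class A U (act2 A g \<delta>) = H2class A U \<delta>"
    using gS by (auto simp: Stab_def)
  have g: "g \<in> auto A" by (rule NAut_auto[OF gN])
  have gc: "g \<in> carrier Aut" using g by (simp add: carrier_Aut)
  have "\<delta> \<in> H2class A U (act2 A g \<delta>)" using self_class cls by simp
  then obtain f where fU: "f \<in> U \<rightarrow> carrier A"
    and feq: "\<And>u v. u \<in> U \<Longrightarrow> v \<in> U \<Longrightarrow> \<delta> u v = act2 A g \<delta> u v \<otimes> cobound2 A f u v"
    by (auto simp: H2class_def)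
  define k where "k = (\<lambda>w. inv (f w))"
  have kU: "k \<in> U \<rightarrow> carrier A" using fU by (auto simp: k_def)
  have kc: "k w \<in> carrier A" if "w \<in> U" for w using kU that by auto
  define c where "c = (\<lambda>u. g \<otimes>\<^bsub>Aut\<^esub> u \<otimes>\<^bsub>Aut\<^esub> inv\<^bsub>Aut\<^esub> g)"
  define ci where "ci = (\<lambda>u. inv\<^bsub>Aut\<^esub> g \<otimes>\<^bsub>Aut\<^esub> u \<otimes>\<^bsub>Aut\<^esub> g)"
  have cU: "c u \<in> U" if "u \<in> U" for u using NAut_conj1[OF gN that] by (simp add: c_def)
  have ciU: "ci u \<in> U" if "u \<in> U" for u using NAut_conj2[OF gN that] by (simp add: ci_def)
  have cic: "ci (c u) = u" if "u \<in> U" for u using Aut.gconj1[OF gc, of u] that by (simp add: c_def ci_def carrier_Aut)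
  have cci: "c (ci u) = u" if "u \<in> U" for u using Aut.gconj2[OF gc, of u] that by (simp add: c_def ci_def carrier_Aut)
  have cmult: "c (u \<otimes>\<^bsub>Aut\<^esub> v) = c u \<otimes>\<^bsub>Aut\<^esub> c v" if "u \<in> U" "v \<in> U" for u v
    using Aut.gconj3[OF gc, of u v] that by (simp add: c_def carrier_Aut)
  have cONE: "c ONE = ONE" using gc by (simp add: c_def)
  have capp: "(c u) (g b) = g (u b)" if u: "u \<in> U" and b: "b \<in> carrier A" for u b
    using u b g by (simp add: c_def Aut_mult_apply auto_inv_apply2)
  have act2c: "act2 A g \<delta> (c u) (c v) = g (\<delta> u v)" if "u \<in> U" "v \<in> U" for u v
    using cic that unfolding act2_def ci_def by simp
  have keq: "act2 A g \<delta> u v = \<delta> u v \<otimes> cobound2 A k u v" if u: "u \<in> U" and v: "v \<in> U" for u v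
  proof -
    have X: "act2 A g \<delta> u v \<in> carrier A" using g ciU[OF u] ciU[OF v] unfolding act2_def ci_def by simp
    have "act2 A g \<delta> u v = \<delta> u v \<otimes> inv (cobound2 A f u v)"
      using feq[OF u v] X fU u v by (simp add: inv_solve_right)
    thus ?thesis using cob_inv[OF fU u v] by (simp add: k_def)
  qed
  have k1: "k ONE = inv e0 \<otimes> g e0"
  proof -
    have "g e0 = act2 A g \<delta> (c ONE) (c ONE)" using act2c[of ONE ONE] by simp
    also have "\<dots> = e0 \<otimes> (k ONE \<otimes> k ONE \<otimes> inv (k ONE))"
      using keq[of ONE ONE] cONE by (simp add: cobound2_def kc)
    also have "\<dots> = e0 \<otimes> k ONE" using kc[of ONE] by (simp add: m_assoc)
    finally have "g e0 = e0 \<otimes> k ONE" .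
    thus ?thesis using kc[of ONE] g by (simp add: inv_solve_left)
  qed
  define \<alpha> where "\<alpha> = (\<lambda>x\<in>carrier GG. (g (fst x) \<otimes> k (c (snd x)), c (snd x)))"
  have \<alpha>app: "\<alpha> (a, u) = (g a \<otimes> k (c u), c u)" if "a \<in> carrier A" "u \<in> U" for a u
    using that by (simp add: \<alpha>_def GG_carrier)
  have \<alpha>hom: "\<alpha> \<in> hom GG GG"
  proof (rule homI)
    fix x assume "x \<in> carrier GG"
    then obtain a u where x: "x = (a, u)" "a \<in> carrier A" "u \<in> U" by (auto simp: GG_carrier)
    show "\<alpha> x \<in> carrier GG" using x \<alpha>app cU kc g by (simp add: GG_carrier)
  next
    fix x y assume "x \<in> carrier GG" "y \<in> carrier GG"
    then obtain a u b v where x: "x = (a, u)" "a \<in> carrier A" "u \<in> U" and y: "y = (b, v)" "b \<in> carrier A" "v \<in> U"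
      by (auto simp: GG_carrier)
    define K where "K = k (c u \<otimes>\<^bsub>Aut\<^esub> c v)"
    define K1 where "K1 = k (c u)"
    define K2 where "K2 = k (c v)"
    define d' where "d' = \<delta> (c u) (c v)"
    have cl2: "K \<in> carrier A" "K1 \<in> carrier A" "K2 \<in> carrier A" "d' \<in> carrier A" "c u K2 \<in> carrier A"
      "g a \<in> carrier A" "g (u b) \<in> carrier A" "g b \<in> carrier A"
      using x y cU kc g by (auto simp: K_def K1_def K2_def d'_def)
    have gd: "g (\<delta> u v) = d' \<otimes> (K1 \<otimes> c u K2 \<otimes> inv K)"
      using keq[OF cU[OF x(3)] cU[OF y(3)]] act2c[OF x(3) y(3)]
      by (simp add: cobound2_def K_def K1_def K2_def d'_def)
    have "fst (\<alpha> (x \<otimes>\<^bsub>GG\<^esub> y)) = g (a \<otimes> u b \<otimes> \<delta> u v) \<otimes> K"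
      using x y \<alpha>app cmult by (simp add: K_def)
    also have "\<dots> = g a \<otimes> g (u b) \<otimes> (d' \<otimes> (K1 \<otimes> c u K2 \<otimes> inv K)) \<otimes> K"
      using x y g gd by simp
    also have "\<dots> = (g a \<otimes> g (u b) \<otimes> d' \<otimes> K1 \<otimes> c u K2) \<otimes> (inv K \<otimes> K)"
      using cl2 by (simp only: m_ac inv_closed m_closed)
    also have "\<dots> = g a \<otimes> g (u b) \<otimes> d' \<otimes> K1 \<otimes> c u K2" using cl2 by simp
    also have "\<dots> = fst (\<alpha> x \<otimes>\<^bsub>GG\<^esub> \<alpha> y)"
      using x y \<alpha>app cl2 capp[OF x(3) y(2)] cU
      by (simp add: K1_def K2_def d'_def m_ac)
    finally have 1: "fst (\<alpha> (x \<otimes>\<^bsub>GG\<^esub> y)) = fst (\<alpha> x \<otimes>\<^bsub>GG\<^esub> \<alpha> y)" .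
    have 2: "snd (\<alpha> (x \<otimes>\<^bsub>GG\<^esub> y)) = snd (\<alpha> x \<otimes>\<^bsub>GG\<^esub> \<alpha> y)"
      using x y \<alpha>app cmult by simp
    show "\<alpha> (x \<otimes>\<^bsub>GG\<^esub> y) = \<alpha> x \<otimes>\<^bsub>GG\<^esub> \<alpha> y" using 1 2 by (simp add: prod_eq_iff)
  qed
  have \<alpha>inj: "inj_on \<alpha> (carrier GG)"
  proof (rule inj_onI)
    fix x y assume "x \<in> carrier GG" "y \<in> carrier GG" and e: "\<alpha> x = \<alpha> y"
    then obtain a u b v where x: "x = (a, u)" "a \<in> carrier A" "u \<in> U" and y: "y = (b, v)" "b \<in> carrier A" "v \<in> U"
      by (auto simp: GG_carrier)
    have e1: "c u = c v" and e2: "g a \<otimes> k (c u) = g b \<otimes> k (c v)" using e x y \<alpha>app by auto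
    have uv: "u = v" using e1 cic x y by metis
    have "g a = g b" using e2 uv kc[OF cU[OF y(3)]] x y g by (simp add: r_cancel)
    hence "a = b" using auto_inv_apply2[OF g x(2)] auto_inv_apply2[OF g y(2)] by metis
    thus "x = y" using uv x y by simp
  qed
  have \<alpha>surj: "\<alpha> ` carrier GG = carrier GG"
  proof
    show "\<alpha> ` carrier GG \<subseteq> carrier GG" using \<alpha>hom by (auto simp: hom_def)
    show "carrier GG \<subseteq> \<alpha> ` carrier GG"
    proof
      fix y assume "y \<in> carrier GG"
      then obtain b w where y: "y = (b, w)" "b \<in> carrier A" "w \<in> U" by (auto simp: GG_carrier)
      define a where "a = (inv\<^bsub>Aut\<^esub> g) (b \<otimes> inv (k w))"
      have a: "a \<in> carrier A" using y g kc by (simp add: a_def)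
      have ga: "g a = b \<otimes> inv (k w)" using y g kc by (simp add: a_def auto_inv_apply1)
      have "\<alpha> (a, ci w) = (b \<otimes> inv (k w) \<otimes> k w, w)" using \<alpha>app a ciU y cci ga by simp
      also have "\<dots> = y" using y kc by (simp add: m_assoc)
      finally show "y \<in> \<alpha> ` carrier GG" using a ciU[OF y(3)] by (metis GG_carrier SigmaI image_eqI)
    qed
  qed
  have \<alpha>auto: "\<alpha> \<in> auto GG"
    using \<alpha>hom \<alpha>inj \<alpha>surj by (simp add: auto_def Bij_def bij_betw_def \<alpha>_def)
  have "rho \<alpha> = g"
  proof (rule auto_eqI[OF rho_auto[OF \<alpha>auto] g])
    fix a assume a: "a \<in> carrier A"
    have "emb (rho \<alpha> a) = \<alpha> (emb a)" using rho_apply[OF \<alpha>auto a] by simp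
    also have "\<dots> = (g (a \<otimes> inv e0) \<otimes> k ONE, ONE)" using a \<alpha>app cONE by (simp add: emb_eq)
    also have "\<dots> = (g a \<otimes> inv (g e0) \<otimes> (inv e0 \<otimes> g e0), ONE)" using a g k1 by simp
    also have "\<dots> = (g a \<otimes> inv e0 \<otimes> (inv (g e0) \<otimes> g e0), ONE)"
      using a g by (simp only: m_ac inv_closed m_closed auto_closed e0_closed)
    also have "\<dots> = emb (g a)" using a g by (simp add: emb_eq)
    finally show "rho \<alpha> a = g a" using emb_cancel rho_apply[OF \<alpha>auto a] a g by simp
  qed
  thus ?thesis using \<alpha>auto by blast
qed

end



context ectx2 begin

abbreviation "KK \<equiv> kernel AG Aut rho"

lemma KK_eq: "KK = {\<alpha> \<in> auto GG. rho \<alpha> = ONE}"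
  by (simp add: kernel_def AG_carrier)

lemma KK_emb: assumes al: "\<alpha> \<in> KK" and a: "a \<in> carrier A" shows "\<alpha> (emb a) = emb a"
proof -
  have al': "\<alpha> \<in> auto GG" "rho \<alpha> = ONE" using al KK_eq by auto
  show ?thesis using rho_apply[OF al'(1) a] al'(2) a by simp
qed

lemma KK_snd: assumes al: "\<alpha> \<in> KK" and x: "x \<in> carrier GG" shows "snd (\<alpha> x) = snd x"
proof -
  have al': "\<alpha> \<in> auto GG" "rho \<alpha> = ONE" using al KK_eq by auto
  have "snd x \<in> auto A" using x by (auto simp: GG_carrier)
  thus ?thesis using rho_snd[OF al'(1) x] al'(2) by simp
qed

definition Phi where "Phi \<alpha> = (\<lambda>u\<in>U. fst (\<alpha> (\<one>, u)))"

lemma KK_one: assumes al: "\<alpha> \<in> KK" and u: "u \<in> U" shows "\<alpha> (\<one>, u) = (Phi \<alpha> u, u)" "Phi \<alpha> u \<in> carrier A"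
proof -
  have al': "\<alpha> \<in> auto GG" using al KK_eq by auto
  have x: "(\<one>, u) \<in> carrier GG" using u by (simp add: GG_carrier)
  show "\<alpha> (\<one>, u) = (Phi \<alpha> u, u)" using KK_snd[OF al x] u by (simp add: Phi_def prod_eq_iff)
  show "Phi \<alpha> u \<in> carrier A" using autoGG_closed[OF al' x] u by (auto simp: Phi_def GG_carrier mem_Times_iff)
qed

lemma KK_app: assumes al: "\<alpha> \<in> KK" and a: "a \<in> carrier A" and u: "u \<in> U"
  shows "\<alpha> (a, u) = (a \<otimes> Phi \<alpha> u, u)"
proof -
  have al': "\<alpha> \<in> auto GG" using al KK_eq by auto
  have "\<alpha> (a, u) = \<alpha> (emb a \<otimes>\<^bsub>GG\<^esub> (\<one>, u))" using decomp[OF a u] by simp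
  also have "\<dots> = emb a \<otimes>\<^bsub>GG\<^esub> (Phi \<alpha> u, u)"
  proof -
    have x: "(\<one>, u) \<in> carrier GG" using u by (simp add: GG_carrier)
    show ?thesis using autoGG_mult[OF al' emb_in[OF a] x] KK_emb[OF al a] KK_one(1)[OF al u] by simp
  qed
  also have "\<dots> = (a \<otimes> Phi \<alpha> u, u)" using emb_left a u KK_one[OF al u] by simp
  finally show ?thesis .
qed

lemma Phi_Z1: assumes al: "\<alpha> \<in> KK" shows "Phi \<alpha> \<in> Z1 A U"
proof -
  have al': "\<alpha> \<in> auto GG" using al KK_eq by auto
  have "Phi \<alpha> (u \<otimes>\<^bsub>Aut\<^esub> v) = Phi \<alpha> u \<otimes> u (Phi \<alpha> v)" if u: "u \<in> U" and v: "v \<in> U" for u v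
  proof -
    have uv: "u \<otimes>\<^bsub>Aut\<^esub> v \<in> U" using u v by simp
    have pc: "Phi \<alpha> u \<in> carrier A" "Phi \<alpha> v \<in> carrier A" "Phi \<alpha> (u \<otimes>\<^bsub>Aut\<^esub> v) \<in> carrier A"
      using KK_one al u v uv by auto
    have xs: "(\<one>, u) \<in> carrier GG" "(\<one>, v) \<in> carrier GG" using u v by (auto simp: GG_carrier)
    have "(\<delta> u v \<otimes> Phi \<alpha> (u \<otimes>\<^bsub>Aut\<^esub> v), u \<otimes>\<^bsub>Aut\<^esub> v) = \<alpha> (\<delta> u v, u \<otimes>\<^bsub>Aut\<^esub> v)"
      using KK_app[OF al _ uv, of "\<delta> u v"] u v by simp
    also have "\<dots> = \<alpha> ((\<one>, u) \<otimes>\<^bsub>GG\<^esub> (\<one>, v))" using u v by simp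
    also have "\<dots> = (Phi \<alpha> u, u) \<otimes>\<^bsub>GG\<^esub> (Phi \<alpha> v, v)"
      using autoGG_mult[OF al' xs(1) xs(2)] KK_one(1)[OF al u] KK_one(1)[OF al v] u v by simp
    finally have "\<delta> u v \<otimes> Phi \<alpha> (u \<otimes>\<^bsub>Aut\<^esub> v) = Phi \<alpha> u \<otimes> u (Phi \<alpha> v) \<otimes> \<delta> u v" by simp
    hence "Phi \<alpha> (u \<otimes>\<^bsub>Aut\<^esub> v) \<otimes> \<delta> u v = Phi \<alpha> u \<otimes> u (Phi \<alpha> v) \<otimes> \<delta> u v"
      using pc u v by (simp add: m_comm)
    thus ?thesis using pc u v by (simp add: r_cancel)
  qed
  moreover have "Phi \<alpha> \<in> U \<rightarrow> carrier A" using KK_one[OF al] by auto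
  moreover have "Phi \<alpha> \<in> extensional U" by (simp add: Phi_def)
  ultimately show ?thesis by (simp add: Z1_def)
qed

lemma KKG_carrier: "carrier (AG\<lparr>carrier := KK\<rparr>) = KK" by simp

lemma kernel_iso: "AG\<lparr>carrier := KK\<rparr> \<cong> Z1_group A U"
proof -
  have hom: "Phi \<in> hom (AG\<lparr>carrier := KK\<rparr>) (Z1_group A U)"
  proof (rule homI)
    fix \<alpha> assume "\<alpha> \<in> carrier (AG\<lparr>carrier := KK\<rparr>)"
    thus "Phi \<alpha> \<in> carrier (Z1_group A U)" using Phi_Z1 by (simp add: Z1_group_def)
  next
    fix \<alpha> \<beta> assume "\<alpha> \<in> carrier (AG\<lparr>carrier := KK\<rparr>)" "\<beta> \<in> carrier (AG\<lparr>carrier := KK\<rparr>)"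
    hence al: "\<alpha> \<in> KK" and be: "\<beta> \<in> KK" by auto
    have al': "\<alpha> \<in> auto GG" and be': "\<beta> \<in> auto GG" using al be KK_eq by auto
    have "Phi (compose (carrier GG) \<alpha> \<beta>) = (\<lambda>u\<in>U. Phi \<alpha> u \<otimes> Phi \<beta> u)"
    proof
      fix u show "Phi (compose (carrier GG) \<alpha> \<beta>) u = (\<lambda>u\<in>U. Phi \<alpha> u \<otimes> Phi \<beta> u) u"
      proof (cases "u \<in> U")
        case True
        have x: "(\<one>, u) \<in> carrier GG" using True by (simp add: GG_carrier)
        have "fst (compose (carrier GG) \<alpha> \<beta> (\<one>, u)) = fst (\<alpha> (\<beta> (\<one>, u)))" using x by (simp add: compose_def)
        also have "\<dots> = Phi \<beta> u \<otimes> Phi \<alpha> u" using KK_one[OF be True] KK_app[OF al _ True] by simp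
        also have "\<dots> = Phi \<alpha> u \<otimes> Phi \<beta> u" using KK_one[OF be True] KK_one[OF al True] by (simp add: m_comm)
        finally show ?thesis using True by (simp add: Phi_def)
      qed (simp add: Phi_def)
    qed
    thus "Phi (\<alpha> \<otimes>\<^bsub>AG\<lparr>carrier := KK\<rparr>\<^esub> \<beta>) = Phi \<alpha> \<otimes>\<^bsub>Z1_group A U\<^esub> Phi \<beta>"
      using al' be' by (simp add: AG_mult Z1_group_def)
  qed
  have inj: "inj_on Phi KK"
  proof (rule inj_onI)
    fix \<alpha> \<beta> assume al: "\<alpha> \<in> KK" and be: "\<beta> \<in> KK" and e: "Phi \<alpha> = Phi \<beta>"
    have al': "\<alpha> \<in> auto GG" and be': "\<beta> \<in> auto GG" using al be KK_eq by auto
    have ex: "\<alpha> \<in> extensional (carrier GG)" "\<beta> \<in> extensional (carrier GG)"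
      using al' be' by (auto simp: auto_def Bij_def)
    show "\<alpha> = \<beta>"
    proof (rule extensionalityI[OF ex])
      fix x assume "x \<in> carrier GG"
      then obtain a u where x: "x = (a, u)" "a \<in> carrier A" "u \<in> U" by (auto simp: GG_carrier)
      show "\<alpha> x = \<beta> x" using x KK_app[OF al x(2,3)] KK_app[OF be x(2,3)] e by simp
    qed
  qed
  have surj: "Phi ` KK = Z1 A U"
  proof
    show "Phi ` KK \<subseteq> Z1 A U" using Phi_Z1 by blast
    show "Z1 A U \<subseteq> Phi ` KK"
    proof
      fix f assume fZ: "f \<in> Z1 A U"
      have fU: "f \<in> U \<rightarrow> carrier A" and fext: "f \<in> extensional U"
        and fco: "\<And>u v. u \<in> U \<Longrightarrow> v \<in> U \<Longrightarrow> f (u \<otimes>\<^bsub>Aut\<^esub> v) = f u \<otimes> u (f v)"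
        using fZ by (auto simp: Z1_def)
      have fc: "f u \<in> carrier A" if "u \<in> U" for u using fU that by auto
      have f1: "f ONE = \<one>"
      proof -
        have "f ONE \<otimes> \<one> = f ONE \<otimes> f ONE" using fco[of ONE ONE] fc[of ONE] by simp
        thus ?thesis using fc[of ONE] by (simp add: l_cancel)
      qed
      define \<alpha> where "\<alpha> = (\<lambda>x\<in>carrier GG. (fst x \<otimes> f (snd x), snd x))"
      have \<alpha>app: "\<alpha> (a, u) = (a \<otimes> f u, u)" if "a \<in> carrier A" "u \<in> U" for a u
        using that by (simp add: \<alpha>_def GG_carrier)
      have \<alpha>hom: "\<alpha> \<in> hom GG GG"
      proof (rule homI)
        fix x assume "x \<in> carrier GG"
        then obtain a u where x: "x = (a, u)" "a \<in> carrier A" "u \<in> U" by (auto simp: GG_carrier)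
        show "\<alpha> x \<in> carrier GG" using x \<alpha>app fc by (simp add: GG_carrier)
      next
        fix x y assume "x \<in> carrier GG" "y \<in> carrier GG"
        then obtain a u b v where x: "x = (a, u)" "a \<in> carrier A" "u \<in> U" and y: "y = (b, v)" "b \<in> carrier A" "v \<in> U"
          by (auto simp: GG_carrier)
        show "\<alpha> (x \<otimes>\<^bsub>GG\<^esub> y) = \<alpha> x \<otimes>\<^bsub>GG\<^esub> \<alpha> y"
          using x y \<alpha>app fc fco[OF x(3) y(3)] by (simp add: m_ac)
      qed
      have \<alpha>inj: "inj_on \<alpha> (carrier GG)"
      proof (rule inj_onI)
        fix x y assume "x \<in> carrier GG" "y \<in> carrier GG" and e: "\<alpha> x = \<alpha> y"
        then obtain a u b v where x: "x = (a, u)" "a \<in> carrier A" "u \<in> U" and y: "y = (b, v)" "b \<in> carrier A" "v \<in> U"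
          by (auto simp: GG_carrier)
        have uv: "u = v" using e x y \<alpha>app by simp
        have "a \<otimes> f u = b \<otimes> f u" using e x y \<alpha>app uv by simp
        hence "a = b" using x y fc by (simp add: r_cancel)
        thus "x = y" using uv x y by simp
      qed
      have \<alpha>surj: "\<alpha> ` carrier GG = carrier GG"
      proof
        show "\<alpha> ` carrier GG \<subseteq> carrier GG" using \<alpha>hom by (auto simp: hom_def)
        show "carrier GG \<subseteq> \<alpha> ` carrier GG"
        proof
          fix y assume "y \<in> carrier GG"
          then obtain b w where y: "y = (b, w)" "b \<in> carrier A" "w \<in> U" by (auto simp: GG_carrier)
          have "\<alpha> (b \<otimes> inv (f w), w) = (b \<otimes> inv (f w) \<otimes> f w, w)" using \<alpha>app y fc by simp
          also have "\<dots> = y" using y fc by (simp add: m_assoc)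
          finally show "y \<in> \<alpha> ` carrier GG" using y fc by (metis GG_carrier SigmaI image_eqI m_closed inv_closed)
        qed
      qed
      have \<alpha>auto: "\<alpha> \<in> auto GG"
        using \<alpha>hom \<alpha>inj \<alpha>surj by (simp add: auto_def Bij_def bij_betw_def \<alpha>_def)
      have "rho \<alpha> = ONE"
      proof (rule auto_eqI[OF rho_auto[OF \<alpha>auto] ONE_auto])
        fix a assume a: "a \<in> carrier A"
        have "emb (rho \<alpha> a) = \<alpha> (emb a)" using rho_apply[OF \<alpha>auto a] by simp
        also have "\<dots> = emb a" using a \<alpha>app f1 by (simp add: emb_eq)
        finally show "rho \<alpha> a = ONE a" using emb_cancel rho_apply[OF \<alpha>auto a] a by simp
      qed
      hence \<alpha>K: "\<alpha> \<in> KK" using \<alpha>auto KK_eq by simp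
      have "Phi \<alpha> = f"
      proof
        fix u show "Phi \<alpha> u = f u"
        proof (cases "u \<in> U")
          case True thus ?thesis using \<alpha>app[of \<one> u] fc by (simp add: Phi_def)
        next
          case False thus ?thesis using fext by (simp add: Phi_def extensional_def)
        qed
      qed
      thus "f \<in> Phi ` KK" using \<alpha>K by blast
    qed
  qed
  have "Phi \<in> iso (AG\<lparr>carrier := KK\<rparr>) (Z1_group A U)"
    using hom inj surj by (simp add: iso_def bij_betw_def Z1_group_def)
  thus ?thesis by (rule is_isoI)
qed

end

theorem theorem3p6:
  fixes A :: "('a, 'b) monoid_scheme" and U :: "('a \<Rightarrow> 'a) set"
    and \<delta> :: "('a \<Rightarrow> 'a) \<Rightarrow> ('a \<Rightarrow> 'a) \<Rightarrow> 'a"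
  assumes "fin_prod_elem_abelian A"
    and "subgroup U (AutoGroup A)"
    and "F_relevant A U"
    and "\<delta> \<in> Z2 A U"
  shows "(\<forall>\<alpha>\<in>auto (ext_group A U \<delta>).
            \<alpha> ` (ext_emb A \<delta> ` carrier A) = ext_emb A \<delta> ` carrier A)
       \<and> restr_A A \<delta> \<in> hom (AutoGroup (ext_group A U \<delta>)) (AutoGroup A)
       \<and> restr_A A \<delta> ` auto (ext_group A U \<delta>) = Stab A U \<delta>
       \<and> (AutoGroup (ext_group A U \<delta>))
            \<lparr>carrier := kernel (AutoGroup (ext_group A U \<delta>)) (AutoGroup A) (restr_A A \<delta>)\<rparr>
          \<cong> Z1_group A U"
proof -
  have cg: "comm_group A" and fin: "finite (carrier A)"
    using assms(1) by (auto simp: fin_prod_elem_abelian_def)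
  interpret E: ectx2 A U \<delta>
    using cg fin assms(2-4) by (simp add: ectx2_def ectx_def ectx2_axioms_def)
  have c1: "\<forall>\<alpha>\<in>auto (ext_group A U \<delta>).
            \<alpha> ` (ext_emb A \<delta> ` carrier A) = ext_emb A \<delta> ` carrier A"
    using E.char_E[OF fin assms(3)] E.emb_image by simp
  have c3: "restr_A A \<delta> ` auto (ext_group A U \<delta>) = Stab A U \<delta>"
    using E.rho_Stab E.Stab_lift by blast
  show ?thesis using c1 E.rho_hom c3 E.kernel_iso by simp
qed

end
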